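(* For every integer $m\ge 1$, the number of $321$-avoiding permutations of $\{1,\dots,m\}$ whose last letter is not $m$ equals $C_m-C_{m-1}$, and the number of $321$-avoiding permutations of $\{1,\dots,m\}$ whose first letter is not $1$ also equals $C_m-C_{m-1}$. Consequently, for $n\ge 3$ the number of permutations of $\{1,\dots,n\}$ containing the pattern $321$ exactly once equals $$\sum_{b=2}^{n-1}(C_b-C_{b-1})(C_{n-b+1}-C_{n-b}).$$
   Context: $C_k=\frac{(2k)!}{k!\,(k+1)!}$ denotes the $k$-th Catalan number ($C_0=1$). Permutations are written in one-line notation; a permutation $w_1\cdots w_m$ is $321$-avoiding if there are no positions $i<j<k$ with $w_i>w_j>w_k$, and contains $321$ exactly once if there is exactly one such triple of positions. *)

theory Defs
  imports Main
begin

definition catalan :: "nat \<Rightarrow> nat" where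
  "catalan k = fact (2*k) div (fact k * fact (k+1))"

definition perms :: "nat \<Rightarrow> nat list set" where
  "perms m = {w. distinct w \<and> set w = {1..m}}"

definition occ321 :: "nat list \<Rightarrow> (nat \<times> nat \<times> nat) set" where
  "occ321 w = {(i,j,k). i < j \<and> j < k \<and> k < length w \<and> w!i > w!j \<and> w!j > w!k}"

definition avoids321 :: "nat list \<Rightarrow> bool" where
  "avoids321 w \<longleftrightarrow> occ321 w = {}"

definition contains321_once :: "nat list \<Rightarrow> bool" where
  "contains321_once w \<longleftrightarrow> card (occ321 w) = 1"

end

theory Submission
  imports Defs
begin

definition B :: "nat \<Rightarrow> nat \<Rightarrow> int" where
  "B n j = int ((2*n-j) choose n) - int ((2*n-j) choose (n+1))"

lemma B_rec:
  assumes "1 \<le> j" "j < n"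
  shows "B n j = B n (j+1) + B (n-1) (j-1)"
proof -
  obtain N where N: "2*n - j = Suc N" proof
  show "2*n - j = Suc (2*n-j-1)" using assms by simp
qed
  have N1: "2*n - (j+1) = N" using N by simp
  have N2: "2*(n-1) - (j-1) = N" using N assms by simp
  obtain n' where n': "n = Suc n'" using assms by (cases n) auto
  have e1: "B n j = int ((N choose n') + (N choose Suc n')) - int ((N choose Suc n') + (N choose Suc (Suc n')))"
  proof -
    have "B n j = int ((Suc N) choose (Suc n')) - int ((Suc N) choose (Suc (Suc n')))"
      unfolding B_def N by (simp add: n')
    then show ?thesis by (simp only: binomial_Suc_Suc)
  qed
  have e2: "B n (j+1) = int (N choose Suc n') - int (N choose (Suc (Suc n')))"
  proof -
    have "B n (j+1) = int (N choose n) - int (N choose (n+1))" by (simp only: B_def N1)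
    then show ?thesis by (simp add: n')
  qed
  have e3: "B (n-1) (j-1) = int (N choose n') - int (N choose Suc n')"
  proof -
    have "B (n-1) (j-1) = int (N choose (n-1)) - int (N choose (n-1+1))" by (simp only: B_def N2)
    then show ?thesis by (simp add: n')
  qed
  show ?thesis using e1 e2 e3 by simp
qed

lemma B_nn: "B n n = 1" unfolding B_def by (simp add: mult_2)

lemma F_sum:
  assumes "1 \<le> j" "j \<le> n"
  shows "(\<Sum>i=j-1..n-1. B (n-1) i) = B n j"
  using assms
proof (induction "n - j" arbitrary: j)
  case 0
  then have "j = n" by simp
  then show ?case using 0 by (simp add: B_nn)
next
  case (Suc d)
  then have jn: "j < n" by simp
  have IH: "(\<Sum>i=j..n-1. B (n-1) i) = B n (j+1)"
    using Suc.hyps(1)[of "j+1"] Suc.hyps(2) jn by simp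
  have "(\<Sum>i=j-1..n-1. B (n-1) i) = B (n-1) (j-1) + (\<Sum>i=j..n-1. B (n-1) i)"
    using Suc.prems jn sum.atLeast_Suc_atMost[of "j-1" "n-1" "B (n-1)"] by simp
  also have "\<dots> = B n j" using IH B_rec[of j n] Suc.prems jn by simp
  finally show ?case .
qed

lemma B_0_1: "n \<ge> 1 \<Longrightarrow> B n 0 = B n 1"
proof -
  assume "n \<ge> 1"
  then obtain k where k: "n = Suc k" by (cases n) auto
  have a: "2*n = Suc (Suc (2*k))" "2*n - 1 = Suc (2*k)" using k by auto
  have s: "Suc (2*k) choose Suc k = Suc (2*k) choose k"
    using binomial_symmetric[of k "Suc (2*k)"] by (simp add: Suc_diff_le)
  have "B n 0 = int (Suc (Suc (2*k)) choose Suc k) - int (Suc (Suc (2*k)) choose Suc (Suc k))"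
    unfolding B_def using a k by (simp del: binomial_Suc_Suc)
  also have "\<dots> = int (Suc (2*k) choose Suc k) - int (Suc (2*k) choose Suc (Suc k))"
    by (simp only: binomial_Suc_Suc[of "Suc (2*k)" k] binomial_Suc_Suc[of "Suc (2*k)" "Suc k"] s)
  also have "\<dots> = B n 1" unfolding B_def using a k by (simp del: binomial_Suc_Suc)
  finally show ?thesis .
qed

lemma catalan_B: "int (catalan n) = B n 0"
proof -
  have f: "fact (2*n) = (2*n choose n) * (fact n * fact n)"
    using binomial_fact_lemma[of n "2*n"] by (simp add: mult_2 algebra_simps)
  have s: "(2*n choose (n+1)) * (n+1) = (2*n choose n) * n"
  proof (cases n)
    case 0 then show ?thesis by simp
  next
    case (Suc m)
    have A: "Suc n * (Suc (n + m) choose Suc n) = Suc m * (Suc (n + m) choose n)"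
      by (rule Suc_times_binomial_add)
    have B: "Suc (n+m) = 2*n" using Suc by simp
    have "Suc n * (2*n choose Suc n) = Suc m * (2*n choose n)" using A unfolding B .
    moreover have e: "Suc m = n" using Suc by simp
    ultimately have "Suc n * (2*n choose Suc n) = n * (2*n choose n)" by simp
    then show ?thesis by (simp add: mult.commute)
  qed
  define X where "X = (2*n choose n) - (2*n choose (n+1))"
  define Y where "Y = (2*n choose n)"
  define Z where "Z = (2*n choose (n+1))"
  have s': "Z * (n+1) = Y * n" using s unfolding Y_def Z_def .
  have le: "Z \<le> Y"
  proof -
    have "Z * (n+1) \<le> Y * (n+1)" using s' by simp
    then show ?thesis by (rule mult_right_le_imp_le) simp
  qed
  have X1: "X * (n+1) = Y"
  proof -
    have "X * (n+1) = Y*(n+1) - Z*(n+1)"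
      unfolding X_def Y_def[symmetric] Z_def[symmetric] by (rule diff_mult_distrib)
    also have "\<dots> = Y*(n+1) - Y*n" using s' by simp
    also have "\<dots> = Y" by simp
    finally show ?thesis .
  qed
  have ff: "fact (n+1) = (n+1) * fact n" by simp
  have "fact (2*n) = X * (fact n * fact (n+1))"
    unfolding f Y_def[symmetric] ff X1[symmetric] by (simp only: mult_ac)
  then have "catalan n = X" unfolding catalan_def by simp
  then show ?thesis unfolding B_def X_def using le by (simp add: Y_def Z_def of_nat_diff)
qed

definition insAt :: "nat \<Rightarrow> nat \<Rightarrow> nat list \<Rightarrow> nat list" where
  "insAt p x w = take p w @ x # drop p w"

lemma length_insAt: "p \<le> length w \<Longrightarrow> length (insAt p x w) = Suc (length w)"
  unfolding insAt_def by simp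

lemma nth_insAt:
  assumes "p \<le> length w" "q \<le> length w"
  shows "insAt p x w ! q = (if q < p then w!q else if q = p then x else w!(q-1))"
  using assms unfolding insAt_def
  by (auto simp: nth_append min_def nth_Cons' nth_drop)

lemma avoids_insAt:
  assumes p: "p \<le> length w" and x: "\<forall>y\<in>set w. y < x"
  shows "avoids321 (insAt p x w) \<longleftrightarrow> avoids321 w \<and> sorted (drop p w)"
proof
  assume av: "avoids321 (insAt p x w)"
  let ?v = "insAt p x w"
  define e where "e t = (if t < p then t else Suc t)" for t
  have ev: "t < length w \<Longrightarrow> ?v ! (e t) = w ! t \<and> e t \<le> length w" for t
    using p by (auto simp: e_def nth_insAt)
  have "avoids321 w"
    unfolding avoids321_def
  proof (rule ccontr)
    assume "occ321 w \<noteq> {}"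
    then obtain i j k where o: "(i,j,k) \<in> occ321 w" by auto
    then have "(e i, e j, e k) \<in> occ321 ?v"
      using ev[of i] ev[of j] ev[of k] p unfolding occ321_def
      by (auto simp: e_def length_insAt split: if_splits)
    then show False using av unfolding avoids321_def by auto
  qed
  moreover have "sorted (drop p w)"
    unfolding sorted_iff_nth_mono_less
  proof (intro allI impI, rule ccontr)
    fix a b assume ab: "a < b" "b < length (drop p w)" and "\<not> drop p w ! a \<le> drop p w ! b"
    then have lt: "w ! (p+b) < w ! (p+a)" using p by auto
    have "(p, Suc (p+a), Suc (p+b)) \<in> occ321 ?v"
      unfolding occ321_def using ab lt p x
      by (auto simp: length_insAt nth_insAt)
    then show False using av unfolding avoids321_def by auto
  qed
  ultimately show "avoids321 w \<and> sorted (drop p w)" by simp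
next
  assume a: "avoids321 w \<and> sorted (drop p w)"
  let ?v = "insAt p x w"
  show "avoids321 ?v"
    unfolding avoids321_def
  proof (rule ccontr)
    assume "occ321 ?v \<noteq> {}"
    then obtain i j k where o: "(i,j,k) \<in> occ321 ?v" by auto
    then have ijk: "i < j" "j < k" "k \<le> length w" "?v!i > ?v!j" "?v!j > ?v!k"
      unfolding occ321_def using p by (auto simp: length_insAt)
    show False
    proof (cases "i = p")
      case True
      then have "w!(j-1) > w!(k-1)" using ijk p by (auto simp: nth_insAt)
      moreover have "drop p w ! (j-1-p) \<le> drop p w ! (k-1-p)"
      proof -
        have "sorted (drop p w)" using a by simp
        moreover have "j-1-p < k-1-p" "k-1-p < length (drop p w)" using ijk True by auto
        ultimately show ?thesis unfolding sorted_iff_nth_mono_less by blast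
      qed
      moreover have "drop p w ! (j-1-p) = w!(j-1)" "drop p w ! (k-1-p) = w!(k-1)"
        using ijk True p by auto
      ultimately show False using ijk True p by auto
    next
      case False
      have xin: "t < length w \<Longrightarrow> w!t < x" for t using x by auto
      have nj: "j \<noteq> p"
      proof
        assume "j = p" then show False using ijk xin[of i] p by (auto simp: nth_insAt)
      qed
      have nk: "k \<noteq> p"
      proof
        assume "k = p" then show False using ijk xin[of j] p by (auto simp: nth_insAt)
      qed
      define d where "d t = (if t < p then t else t - 1)" for t
      have "(d i, d j, d k) \<in> occ321 w"
        using ijk False nj nk p unfolding occ321_def
        by (auto simp: d_def nth_insAt split: if_splits)
      then show False using a unfolding avoids321_def by auto
    qed
  qed
qed

lemma set_insAt: "set (insAt p x w) = insert x (set w)"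
proof -
  have "set w = set (take p w) \<union> set (drop p w)" by (metis append_take_drop_id set_append)
  then show ?thesis unfolding insAt_def by auto
qed

lemma distinct_insAt: "distinct (insAt p x w) \<longleftrightarrow> distinct w \<and> x \<notin> set w"
proof -
  have a: "distinct w \<longleftrightarrow> distinct (take p w @ drop p w)" by simp
  have b: "set w = set (take p w) \<union> set (drop p w)" by (metis append_take_drop_id set_append)
  show ?thesis unfolding insAt_def a using b by (auto simp del: append_take_drop_id)
qed

lemma perms_length: "w \<in> perms n \<Longrightarrow> length w = n"
  unfolding perms_def by (metis (mono_tags) card_atLeastAtMost diff_Suc_1 distinct_card mem_Collect_eq)

lemma finite_perms: "finite (perms n)"
proof -
  have "perms n \<subseteq> {xs. set xs \<subseteq> {1..n} \<and> length xs = n}"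
    using perms_length unfolding perms_def by auto
  moreover have "finite {xs. set xs \<subseteq> {1..n} \<and> length xs = n}"
    by (rule finite_lists_length_eq) simp
  ultimately show ?thesis by (rule finite_subset)
qed

lemma perms_0: "perms 0 = {[]}"
  unfolding perms_def by auto

lemma inj_insAt: "inj_on (insAt p x) {w. p \<le> length w}"
proof (rule inj_onI)
  fix u v assume u: "u \<in> {w. p \<le> length w}" and v: "v \<in> {w. p \<le> length w}"
    and e: "insAt p x u = insAt p x v"
  have "take p (insAt p x u) = take p u" "drop (Suc p) (insAt p x u) = drop p u"
    using u unfolding insAt_def by auto
  moreover have "take p (insAt p x v) = take p v" "drop (Suc p) (insAt p x v) = drop p v"
    using v unfolding insAt_def by auto
  ultimately show "u = v" using e by (metis append_take_drop_id)
qed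

lemma insAt_perms:
  assumes "w' \<in> perms (n-1)" "n \<ge> 1" "p < n"
  shows "insAt p n w' \<in> perms n"
proof -
  have l: "length w' = n - 1" using assms perms_length by auto
  have "set (insAt p n w') = insert n (set w')" by (rule set_insAt)
  moreover have "distinct (insAt p n w')" using assms unfolding distinct_insAt perms_def by auto
  ultimately show ?thesis using assms unfolding perms_def by auto
qed

lemma image_insAt:
  assumes "n \<ge> 1" "p < n"
  shows "{w \<in> perms n. avoids321 w \<and> w!p = n}
       = insAt p n ` {w' \<in> perms (n-1). avoids321 w' \<and> sorted (drop p w')}"
proof (rule set_eqI, rule iffI)
  fix w assume w: "w \<in> {w \<in> perms n. avoids321 w \<and> w!p = n}"
  define w' where "w' = take p w @ drop (Suc p) w"
  have lw: "length w = n" using w perms_length by auto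
  have wi: "w = insAt p n w'"
  proof -
    have e: "w = take p w @ w!p # drop (Suc p) w" by (rule id_take_nth_drop) (simp add: lw assms)
    have t: "take p w' = take p w" "drop p w' = drop (Suc p) w" unfolding w'_def using lw assms by auto
    have wp: "w!p = n" using w by simp
    show ?thesis unfolding insAt_def t using e unfolding wp .
  qed
  have dw: "distinct w" "set w = {1..n}" using w unfolding perms_def by auto
  have "w' \<in> perms (n-1)"
  proof -
    have "distinct w'" using dw(1) unfolding wi distinct_insAt by simp
    moreover have "set w' = set w - {n}"
    proof -
      have "set w = insert n (set w')" unfolding wi set_insAt ..
      moreover have "n \<notin> set w'" using dw(1) unfolding wi distinct_insAt by simp
      ultimately show ?thesis by auto
    qed
    moreover have "{1..n} - {n} = {1..n-1}" using assms by auto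
    ultimately show ?thesis using dw(2) unfolding perms_def by simp
  qed
  moreover have "\<forall>y\<in>set w'. y < n"
  proof -
    have "set w' \<subseteq> set w" "n \<notin> set w'" using dw(1) unfolding wi distinct_insAt set_insAt
      by auto
    then show ?thesis using dw(2) by (auto simp: subset_iff) (metis atLeastAtMost_iff le_neq_implies_less)
  qed
  moreover have "p \<le> length w'" using lw assms unfolding w'_def by simp
  ultimately have "w' \<in> {w' \<in> perms (n-1). avoids321 w' \<and> sorted (drop p w')}"
    using w avoids_insAt[of p w' n] unfolding wi by simp
  then show "w \<in> insAt p n ` {w' \<in> perms (n-1). avoids321 w' \<and> sorted (drop p w')}"
    using wi by (rule rev_image_eqI)
next
  fix w assume "w \<in> insAt p n ` {w' \<in> perms (n-1). avoids321 w' \<and> sorted (drop p w')}"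
  then obtain w' where w': "w' \<in> perms (n-1)" "avoids321 w'" "sorted (drop p w')" "w = insAt p n w'"
    by auto
  have l: "length w' = n - 1" using w' perms_length by auto
  have lt: "\<forall>y\<in>set w'. y < n" using w'(1) assms unfolding perms_def by auto
  have "insAt p n w' ! p = n" using l assms by (simp add: nth_insAt)
  moreover have "avoids321 (insAt p n w')" using avoids_insAt[of p w' n] lt l assms w' by simp
  ultimately show "w \<in> {w \<in> perms n. avoids321 w \<and> w!p = n}"
    using w' insAt_perms[OF w'(1) assms] by simp
qed


definition S :: "nat \<Rightarrow> nat \<Rightarrow> nat list set" where
  "S n j = {w \<in> perms n. avoids321 w \<and> sorted (drop (n-j) w)}"

lemma card_fixpos:
  assumes "n \<ge> 1" "p < n"
  shows "card {w \<in> perms n. avoids321 w \<and> w!p = n \<and> P w}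
       = card {w' \<in> perms (n-1). avoids321 w' \<and> sorted (drop p w') \<and> P (insAt p n w')}"
proof -
  let ?Y = "{w' \<in> perms (n-1). avoids321 w' \<and> sorted (drop p w') \<and> P (insAt p n w')}"
  have "{w \<in> perms n. avoids321 w \<and> w!p = n \<and> P w} = insAt p n ` ?Y"
  proof -
    have "{w \<in> perms n. avoids321 w \<and> w!p = n \<and> P w}
        = {w \<in> {w \<in> perms n. avoids321 w \<and> w!p = n}. P w}" by blast
    also have "\<dots> = {w \<in> insAt p n ` {w' \<in> perms (n-1). avoids321 w' \<and> sorted (drop p w')}. P w}"
      unfolding image_insAt[OF assms] ..
    also have "\<dots> = insAt p n ` ?Y" by blast
    finally show ?thesis .
  qed
  moreover have "inj_on (insAt p n) ?Y"
  proof (rule inj_on_subset[OF inj_insAt])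
    show "?Y \<subseteq> {w. p \<le> length w}" using perms_length assms by fastforce
  qed
  ultimately show ?thesis by (simp add: card_image)
qed

lemma drop_insAt_le:
  assumes "q \<le> p" "p \<le> length w"
  shows "drop q (insAt p x w) = insAt (p-q) x (drop q w)"
proof -
  have "drop q (insAt p x w) = drop q (take p w) @ x # drop p w"
    using assms unfolding insAt_def by (simp add: drop_append)
  moreover have "take (p-q) (drop q w) = drop q (take p w)" using assms by (simp add: take_drop)
  moreover have "drop (p-q) (drop q w) = drop p w" using assms by simp
  ultimately show ?thesis unfolding insAt_def by simp
qed

lemma drop_insAt_gt:
  assumes "p < q" "p \<le> length w"
  shows "drop q (insAt p x w) = drop (q-1) w"
proof -
  obtain r where r: "q = Suc (p + r)" using assms less_iff_Suc_add by auto
  have "drop q (insAt p x w) = drop (q - p) (x # drop p w)"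
    using assms unfolding insAt_def by (simp add: drop_append)
  also have "\<dots> = drop r (drop p w)" unfolding r by simp
  also have "\<dots> = drop (q-1) w" unfolding r by (simp add: add.commute)
  finally show ?thesis .
qed

lemma not_sorted_insAt:
  assumes "r < length v" "\<forall>y\<in>set v. y < x"
  shows "\<not> sorted (insAt r x v)"
proof
  assume s: "sorted (insAt r x v)"
  have "insAt r x v ! r = x" "insAt r x v ! Suc r = v ! r" using assms by (auto simp: nth_insAt)
  moreover have "insAt r x v ! r \<le> insAt r x v ! Suc r"
    using s assms unfolding sorted_iff_nth_mono_less by (simp add: length_insAt)
  moreover have "v ! r < x" using assms nth_mem by blast
  ultimately show False by simp
qed

lemma perms_lt: "w \<in> perms m \<Longrightarrow> \<forall>y\<in>set w. y < Suc m"
  unfolding perms_def by auto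

lemma S_rec:
  assumes j: "1 \<le> j" "j \<le> n"
  shows "card (S n j) = card (S (n-1) (j-1)) + (\<Sum>p<n-j. card (S (n-1) (n-1-p)))"
proof -
  define T where "T p = {w \<in> perms n. avoids321 w \<and> w!p = n \<and> sorted (drop (n-j) w)}" for p
  define U where "U p = {w' \<in> perms (n-1). avoids321 w' \<and> sorted (drop p w')
                         \<and> sorted (drop (n-j) (insAt p n w'))}" for p
  have n1: "n \<ge> 1" using j by simp
  have TU: "p < n \<Longrightarrow> card (T p) = card (U p)" for p
    unfolding T_def U_def by (rule card_fixpos[OF n1])
  have Sun: "S n j = (\<Union>p\<in>{..<n}. T p)"
  proof (rule set_eqI, rule iffI)
    fix w assume w: "w \<in> S n j"
    then have "n \<in> set w" "length w = n" unfolding S_def perms_def using n1 perms_length[of w n]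
      by (auto simp: perms_def)
    then obtain p where "p < n" "w!p = n" by (metis in_set_conv_nth)
    then show "w \<in> (\<Union>p\<in>{..<n}. T p)" using w unfolding S_def T_def by auto
  next
    fix w assume "w \<in> (\<Union>p\<in>{..<n}. T p)"
    then show "w \<in> S n j" unfolding S_def T_def by auto
  qed
  have fin: "finite (T p)" for p unfolding T_def using finite_perms by simp
  have disj: "\<forall>p\<in>{..<n}. \<forall>q\<in>{..<n}. p \<noteq> q \<longrightarrow> T p \<inter> T q = {}"
  proof (intro ballI impI)
    fix p q assume pq: "p \<in> {..<n}" "q \<in> {..<n}" "p \<noteq> q"
    show "T p \<inter> T q = {}"
    proof (rule ccontr)
      assume "T p \<inter> T q \<noteq> {}"
      then obtain w where w: "w \<in> T p" "w \<in> T q" by blast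
      then have "distinct w" "length w = n" "w!p = n" "w!q = n"
        unfolding T_def perms_def using perms_length[of w n] by (auto simp: perms_def)
      then show False using pq nth_eq_iff_index_eq by fastforce
    qed
  qed
  have cS: "card (S n j) = (\<Sum>p<n. card (T p))"
    unfolding Sun by (rule card_UN_disjoint) (use fin disj in auto)
  have U_last: "U (n-1) = S (n-1) (j-1)"
  proof (rule set_eqI)
    fix w' show "w' \<in> U (n-1) \<longleftrightarrow> w' \<in> S (n-1) (j-1)"
    proof (cases "w' \<in> perms (n-1)")
      case True
      have l: "length w' = n-1" using True perms_length by auto
      have lt: "\<forall>y\<in>set w'. y < n" using perms_lt[OF True] n1 by simp
      have i: "insAt (n-1) n w' = w' @ [n]" unfolding insAt_def using l by simp
      have d: "drop (n-j) (w' @ [n]) = drop (n-j) w' @ [n]" using l j by simp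
      have "sorted (drop (n-j) w' @ [n]) \<longleftrightarrow> sorted (drop (n-j) w')"
        using lt by (auto simp: sorted_append dest!: in_set_dropD)
      moreover have "n - 1 - (j - 1) = n - j" using j by simp
      ultimately show ?thesis unfolding U_def S_def using True l i d by simp
    next
      case False then show ?thesis unfolding U_def S_def by simp
    qed
  qed
  have U_small: "p < n-j \<Longrightarrow> U p = S (n-1) (n-1-p)" for p
  proof (rule set_eqI)
    fix w' assume p: "p < n-j"
    show "w' \<in> U p \<longleftrightarrow> w' \<in> S (n-1) (n-1-p)"
    proof (cases "w' \<in> perms (n-1)")
      case True
      have l: "length w' = n-1" using True perms_length by auto
      have d: "drop (n-j) (insAt p n w') = drop (n-j-1) w'"
        using drop_insAt_gt[of p "n-j" w' n] p l by simp
      have "sorted (drop p w') \<Longrightarrow> sorted (drop (n-j-1) w')"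
      proof -
        assume "sorted (drop p w')"
        then have "sorted (drop (n-j-1-p) (drop p w'))" by (rule sorted_wrt_drop)
        moreover have "n-j-1-p + p = n-j-1" using p by simp
        ultimately show ?thesis by simp
      qed
      moreover have "n - 1 - (n - 1 - p) = p" using p by simp
      ultimately show ?thesis unfolding U_def S_def using True d by auto
    next
      case False then show ?thesis unfolding U_def S_def by simp
    qed
  qed
  have U_mid: "n-j \<le> p \<Longrightarrow> p < n-1 \<Longrightarrow> U p = {}" for p
  proof (rule ccontr)
    assume p: "n-j \<le> p" "p < n-1" and "U p \<noteq> {}"
    then obtain w' where w': "w' \<in> perms (n-1)" "sorted (drop (n-j) (insAt p n w'))"
      unfolding U_def by auto
    have l: "length w' = n-1" using w' perms_length by auto
    have lt: "\<forall>y\<in>set w'. y < n" using perms_lt[OF w'(1)] n1 by simp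
    have d: "drop (n-j) (insAt p n w') = insAt (p-(n-j)) n (drop (n-j) w')"
      using drop_insAt_le[of "n-j" p w' n] p l by simp
    have "\<not> sorted (insAt (p-(n-j)) n (drop (n-j) w'))"
      by (rule not_sorted_insAt) (use p l lt in \<open>auto dest: in_set_dropD\<close>)
    then show False using w'(2) d by simp
  qed
  have "(\<Sum>p<n. card (T p)) = (\<Sum>p<n. card (U p))" using TU by simp
  also have "\<dots> = card (U (n-1)) + (\<Sum>p<n-1. card (U p))"
  proof -
    have "{..<n} = insert (n-1) {..<n-1}" using n1 by auto
    then show ?thesis by simp
  qed
  also have "(\<Sum>p<n-1. card (U p)) = (\<Sum>p<n-j. card (U p))"
  proof -
    have e: "{..<n-1} = {..<n-j} \<union> {n-j..<n-1}" using j by auto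
    have "(\<Sum>p\<in>{..<n-j} \<union> {n-j..<n-1}. card (U p)) = (\<Sum>p<n-j. card (U p)) + (\<Sum>p\<in>{n-j..<n-1}. card (U p))"
      by (rule sum.union_disjoint) auto
    then have "(\<Sum>p<n-1. card (U p)) = (\<Sum>p<n-j. card (U p)) + (\<Sum>p\<in>{n-j..<n-1}. card (U p))"
      unfolding e .
    moreover have "(\<Sum>p\<in>{n-j..<n-1}. card (U p)) = 0" using U_mid by simp
    ultimately show ?thesis by simp
  qed
  also have "(\<Sum>p<n-j. card (U p)) = (\<Sum>p<n-j. card (S (n-1) (n-1-p)))"
    using U_small by simp
  finally show ?thesis using cS U_last by simp
qed

lemma S_count: "j \<le> n \<Longrightarrow> int (card (S n j)) = B n j"
proof (induction n arbitrary: j)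
  case 0
  then have "S 0 j = {[]}" unfolding S_def perms_0 avoids321_def occ321_def by auto
  then show ?case using 0 by (simp add: B_def)
next
  case (Suc n)
  have pos: "int (card (S (Suc n) j)) = B (Suc n) j" if j: "1 \<le> j" "j \<le> Suc n" for j
  proof -
    have "int (card (S (Suc n) j)) = int (card (S n (j-1))) + (\<Sum>p<Suc n-j. int (card (S n (n-p))))"
      using S_rec[OF j] by simp
    also have "\<dots> = B n (j-1) + (\<Sum>p<Suc n-j. B n (n-p))"
      using Suc.IH j by simp
    also have "(\<Sum>p<Suc n-j. B n (n-p)) = (\<Sum>i=j..n. B n i)"
      by (rule sum.reindex_bij_witness[of _ "\<lambda>i. n - i" "\<lambda>p. n - p"]) (use j in auto)
    also have "B n (j-1) + (\<Sum>i=j..n. B n i) = (\<Sum>i=j-1..n. B n i)"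
      using j sum.atLeast_Suc_atMost[of "j-1" n "B n"] by simp
    also have "\<dots> = B (Suc n) j" using F_sum[of j "Suc n"] j by simp
    finally show ?thesis .
  qed
  show ?case
  proof (cases "j = 0")
    case True
    have "S (Suc n) 0 = S (Suc n) 1"
    proof -
      have "w \<in> perms (Suc n) \<Longrightarrow> sorted (drop n w)" for w
      proof -
        assume "w \<in> perms (Suc n)"
        then have "length (drop n w) = 1" using perms_length by fastforce
        then obtain y where "drop n w = [y]" by (metis length_0_conv length_Suc_conv One_nat_def)
        then show ?thesis by simp
      qed
      moreover have "w \<in> perms (Suc n) \<Longrightarrow> drop (Suc n) w = []" for w
        using perms_length by fastforce
      ultimately show ?thesis unfolding S_def by auto
    qed
    then show ?thesis using True pos[of 1] B_0_1[of "Suc n"] by simp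
  next
    case False
    then show ?thesis using pos Suc.prems by simp
  qed
qed

lemma Av_count: "card {w \<in> perms n. avoids321 w} = catalan n"
proof -
  have "{w \<in> perms n. avoids321 w} = S n 0" unfolding S_def using perms_length by fastforce
  then have "int (card {w \<in> perms n. avoids321 w}) = int (catalan n)"
    using S_count[of 0 n] catalan_B by simp
  then show ?thesis by simp
qed


lemma finite_Av: "finite {w \<in> perms n. P w}" using finite_perms by simp

lemma card_last:
  assumes "m \<ge> 1"
  shows "card {w \<in> perms m. avoids321 w \<and> last w = m} = catalan (m-1)"
proof -
  have h: "w \<in> perms m \<Longrightarrow> last w = w!(m-1)" for w
  proof -
    assume "w \<in> perms m"
    then have "length w = m" by (rule perms_length)
    moreover have "w \<noteq> []" using \<open>length w = m\<close> assms by auto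
    ultimately show ?thesis using last_conv_nth[of w] by simp
  qed
  have "{w \<in> perms m. avoids321 w \<and> last w = m} = {w \<in> perms m. avoids321 w \<and> w!(m-1) = m \<and> True}"
  proof (rule Collect_cong)
    fix w show "(w \<in> perms m \<and> avoids321 w \<and> last w = m) = (w \<in> perms m \<and> avoids321 w \<and> w!(m-1) = m \<and> True)"
      using h[of w] by auto
  qed
  also have "card \<dots> = card {w' \<in> perms (m-1). avoids321 w' \<and> sorted (drop (m-1) w') \<and> True}"
    by (rule card_fixpos) (use assms in simp_all)
  also have "{w' \<in> perms (m-1). avoids321 w' \<and> sorted (drop (m-1) w') \<and> True} = {w' \<in> perms (m-1). avoids321 w'}"
  proof (rule Collect_cong)
    fix w show "(w \<in> perms (m-1) \<and> avoids321 w \<and> sorted (drop (m-1) w) \<and> True) = (w \<in> perms (m-1) \<and> avoids321 w)"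
      using perms_length[of w "m-1"] by auto
  qed
  finally show ?thesis using Av_count by simp
qed

lemma occ321_map_Suc: "occ321 (map Suc w) = occ321 w"
  unfolding occ321_def by auto

lemma avoids_Cons_small:
  assumes "\<forall>y\<in>set v. x < y"
  shows "avoids321 (x # v) \<longleftrightarrow> avoids321 v"
proof
  assume a: "avoids321 (x # v)"
  show "avoids321 v" unfolding avoids321_def
  proof (rule ccontr)
    assume "occ321 v \<noteq> {}"
    then obtain i j k where "(i,j,k) \<in> occ321 v" by auto
    then have "(Suc i, Suc j, Suc k) \<in> occ321 (x # v)" unfolding occ321_def by auto
    then show False using a unfolding avoids321_def by auto
  qed
next
  assume a: "avoids321 v"
  show "avoids321 (x # v)" unfolding avoids321_def
  proof (rule ccontr)
    assume "occ321 (x # v) \<noteq> {}"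
    then obtain i j k where o: "(i,j,k) \<in> occ321 (x # v)" by auto
    show False
    proof (cases i)
      case 0
      then have "x > v ! (j-1)" "j - 1 < length v" using o unfolding occ321_def by auto
      then show False using assms nth_mem by fastforce
    next
      case (Suc i')
      then have "(i', j-1, k-1) \<in> occ321 v" using o unfolding occ321_def by auto
      then show False using a unfolding avoids321_def by auto
    qed
  qed
qed

lemma Suc_img: "Suc ` {Suc 0..k} = {Suc (Suc 0)..Suc k}"
  by (simp add: image_Suc_atLeastAtMost)

lemma card_hd:
  assumes "m \<ge> 1"
  shows "card {w \<in> perms m. avoids321 w \<and> hd w = 1} = catalan (m-1)"
proof -
  let ?f = "\<lambda>w'. 1 # map Suc w'"
  have fin: "?f w' \<in> perms m" if w': "w' \<in> perms (m-1)" for w'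
  proof -
    have s: "set w' = {Suc 0..m-1}" "distinct w'" using w' unfolding perms_def by auto
    have "set (?f w') = insert 1 {Suc (Suc 0)..m}" using s assms Suc_img[of "m-1"] by simp
    also have "\<dots> = {Suc 0..m}" using assms atLeastAtMost_insertL[of 1 m] by simp
    finally have "set (?f w') = {Suc 0..m}" .
    moreover have "distinct (?f w')" using s by (auto simp: distinct_map)
    ultimately show ?thesis unfolding perms_def by simp
  qed
  have img: "{w \<in> perms m. avoids321 w \<and> hd w = 1} = ?f ` {w' \<in> perms (m-1). avoids321 w'}"
  proof (rule set_eqI, rule iffI)
    fix w assume w: "w \<in> {w \<in> perms m. avoids321 w \<and> hd w = 1}"
    have lw: "length w = m" using w perms_length by auto
    obtain t where wc: "w = 1 # t" using w lw assms by (cases w) auto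
    have dw: "distinct (1 # t)" "set (1 # t) = {Suc 0..m}" using w wc unfolding perms_def by auto
    have st: "set t = {Suc (Suc 0)..m}"
    proof -
      have e1: "set t = set (1#t) - {1}" using dw(1) by auto
      have e2: "{Suc 0..m} = insert (Suc 0) {Suc (Suc 0)..m}"
        using atLeastAtMost_insertL[of "Suc 0" m] assms by simp
      have e3: "Suc 0 \<notin> {Suc (Suc 0)..m}" by simp
      show ?thesis unfolding e1 dw(2) e2 using e3 by simp
    qed
    define w' where "w' = map (\<lambda>x. x - 1) t"
    have mw: "map Suc w' = t" unfolding w'_def map_map
      by (rule map_idI) (use st in auto)
    have "set w' = (\<lambda>x. x - 1) ` {Suc (Suc 0)..m}" unfolding w'_def using st by simp
    also have "\<dots> = {Suc 0..m-1}"
    proof -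
      have "Suc (m-1) = m" using assms by simp
      then have eq: "Suc ` {Suc 0..m-1} = {Suc (Suc 0)..m}" using Suc_img[of "m-1"] by simp
      have "(\<lambda>x. x - 1) ` {Suc (Suc 0)..m} = (\<lambda>x. x - 1) ` Suc ` {Suc 0..m-1}" by (simp only: eq)
      also have "\<dots> = {Suc 0..m-1}" unfolding image_image by simp
      finally show ?thesis .
    qed
    finally have sw': "set w' = {Suc 0..m-1}" .
    have "distinct w'" using dw(1) unfolding mw[symmetric] by (simp add: distinct_map)
    then have wp: "w' \<in> perms (m-1)" using sw' unfolding perms_def by simp
    have "\<forall>y\<in>set (map Suc w'). 1 < y" using sw' by auto
    then have "avoids321 (map Suc w')" using w wc mw avoids_Cons_small[of "map Suc w'" 1] by simp
    then have "avoids321 w'" by (simp add: avoids321_def occ321_map_Suc)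
    then show "w \<in> ?f ` {w' \<in> perms (m-1). avoids321 w'}" using wp wc mw by auto
  next
    fix w assume "w \<in> ?f ` {w' \<in> perms (m-1). avoids321 w'}"
    then obtain w' where w': "w' \<in> perms (m-1)" "avoids321 w'" "w = ?f w'" by auto
    have "\<forall>y\<in>set (map Suc w'). 1 < y" using w'(1) unfolding perms_def by auto
    then have "avoids321 w" using w' avoids_Cons_small[of "map Suc w'" 1]
      by (simp add: avoids321_def occ321_map_Suc)
    then show "w \<in> {w \<in> perms m. avoids321 w \<and> hd w = 1}" using fin[OF w'(1)] w' by simp
  qed
  have "inj ?f" by (auto simp: inj_def inj_map_eq_map)
  then have "card (?f ` {w' \<in> perms (m-1). avoids321 w'}) = card {w' \<in> perms (m-1). avoids321 w'}"
    by (simp add: card_image inj_on_subset)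
  then show ?thesis using img Av_count by simp
qed


lemma perms_set: "w \<in> perms n \<Longrightarrow> set w = {1..n}" unfolding perms_def by simp
lemma perms_distinct: "w \<in> perms n \<Longrightarrow> distinct w" unfolding perms_def by simp

lemma perms_nth_range:
  assumes "w \<in> perms n" "p < n" shows "1 \<le> w!p \<and> w!p \<le> n"
proof -
  have "w!p \<in> set w" using assms perms_length[OF assms(1)] by simp
  then show ?thesis using perms_set[OF assms(1)] by simp
qed

lemma once_struct:
  assumes w: "w \<in> perms n" and o: "occ321 w = {(i,j,k)}"
  shows "w!j = Suc j"
    and "\<And>p. p < j \<Longrightarrow> p \<noteq> i \<Longrightarrow> w!p < w!j"
    and "\<And>r. j < r \<Longrightarrow> r < n \<Longrightarrow> r \<noteq> k \<Longrightarrow> w!r > w!j"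
    and "i < j" "j < k" "k < n" "w!i > w!j" "w!j > w!k"
proof -
  have l: "length w = n" using w by (rule perms_length)
  have d: "distinct w" using w by (rule perms_distinct)
  have ijk: "(i,j,k) \<in> occ321 w" using o by simp
  then show ijk': "i < j" "j < k" "k < n" "w!i > w!j" "w!j > w!k" unfolding occ321_def using l by auto
  have neq: "p < n \<Longrightarrow> q < n \<Longrightarrow> p \<noteq> q \<Longrightarrow> w!p \<noteq> w!q" for p q
    using d l nth_eq_iff_index_eq by metis
  show P1: "w!p < w!j" if "p < j" "p \<noteq> i" for p
  proof (rule ccontr)
    assume "\<not> w!p < w!j"
    then have "w!p > w!j" using neq[of p j] that ijk' by linarith
    then have "(p,j,k) \<in> occ321 w" unfolding occ321_def using that ijk' l by auto
    then show False using o that by auto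
  qed
  show P2: "w!r > w!j" if "j < r" "r < n" "r \<noteq> k" for r
  proof (rule ccontr)
    assume "\<not> w!r > w!j"
    then have "w!r < w!j" using neq[of r j] that ijk' by linarith
    then have "(i,j,r) \<in> occ321 w" unfolding occ321_def using that ijk' l by auto
    then show False using o that by auto
  qed
  define v where "v = w!j"
  define I where "I = {p. p < n \<and> w!p < v}"
  have I_eq: "I = ({..<j} - {i}) \<union> {k}"
  proof (rule set_eqI, rule iffI)
    fix p assume p: "p \<in> I"
    then have pn: "p < n" "w!p < v" unfolding I_def by auto
    show "p \<in> ({..<j} - {i}) \<union> {k}"
    proof (cases "p < j")
      case True
      then have "p \<noteq> i" using pn ijk' unfolding v_def by auto
      then show ?thesis using True by auto
    next
      case False
      have "p \<noteq> j" using pn unfolding v_def by auto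
      then have "p = k" using P2[of p] False pn unfolding v_def by fastforce
      then show ?thesis by simp
    qed
  next
    fix p assume "p \<in> ({..<j} - {i}) \<union> {k}"
    then show "p \<in> I" unfolding I_def v_def using P1 ijk' by auto
  qed
  have cI: "card I = j"
  proof -
    have "card (({..<j} - {i}) \<union> {k}) = card ({..<j} - {i}) + card {k}"
      by (rule card_Un_disjoint) (use ijk' in auto)
    then show ?thesis unfolding I_eq using ijk' by simp
  qed
  have "nth w ` I = {1..v-1}"
  proof (rule set_eqI, rule iffI)
    fix x assume "x \<in> nth w ` I"
    then obtain p where "p \<in> I" "x = w!p" by auto
    then show "x \<in> {1..v-1}" unfolding I_def using perms_nth_range[OF w, of p] by auto
  next
    fix x assume x: "x \<in> {1..v-1}"
    have "v \<le> n" unfolding v_def using perms_nth_range[OF w, of j] ijk' by auto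
    then have "x \<in> set w" using x perms_set[OF w] by auto
    then obtain p where "p < n" "w!p = x" using l by (auto simp: in_set_conv_nth)
    then show "x \<in> nth w ` I" unfolding I_def using x by force
  qed
  moreover have "inj_on (nth w) I" using inj_on_nth[OF d, of I] l unfolding I_def by auto
  ultimately have "card I = v - 1" by (metis card_atLeastAtMost card_image diff_Suc_1 add_diff_cancel_left' )
  then have "v - 1 = j" using cI by simp
  moreover have "v \<ge> 1" unfolding v_def using perms_nth_range[OF w, of j] ijk' by auto
  ultimately show "w!j = Suc j" unfolding v_def by simp
qed


definition phi :: "nat \<Rightarrow> nat list \<Rightarrow> nat list \<Rightarrow> nat list" where
  "phi b L R = map (\<lambda>x. if x = b then hd R else x) (butlast L) @ b # map (\<lambda>y. if y = b then last L else y) (tl R)"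

lemma perms_intro:
  assumes "distinct w" "length w = n" "set w \<subseteq> {1..n}"
  shows "w \<in> perms n"
proof -
  have "card (set w) = n" using assms distinct_card by metis
  then have "set w = {1..n}" using assms(3) by (simp add: card_subset_eq)
  then show ?thesis using assms unfolding perms_def by simp
qed

definition psiL :: "nat \<Rightarrow> nat list \<Rightarrow> nat list" where
  "psiL b w = map (\<lambda>x. if x = Max (set (take (b-1) w)) then b else x) (take (b-1) w) @ [Min (set (drop b w))]"
definition psiR :: "nat \<Rightarrow> nat list \<Rightarrow> nat list" where
  "psiR b w = Max (set (take (b-1) w)) # map (\<lambda>y. if y = Min (set (drop b w)) then b else y) (drop b w)"

locale phictx =
  fixes n b :: nat and L R :: "nat list"
  assumes b2: "2 \<le> b" and bn: "b < n"
    and Lp: "L \<in> perms b" and Lav: "avoids321 L" and La: "last L \<noteq> b"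
    and Rd: "distinct R" and Rs: "set R = {b..n}" and Rav: "avoids321 R" and Rc: "hd R \<noteq> b"
begin

abbreviation "m \<equiv> b - 1"
abbreviation "a \<equiv> last L"
abbreviation "c \<equiv> hd R"
abbreviation "f \<equiv> (\<lambda>x. if x = b then c else x)"
abbreviation "g \<equiv> (\<lambda>y. if y = b then a else y)"
abbreviation "w \<equiv> phi b L R"

lemma lL: "length L = b" using Lp by (rule perms_length)
lemma lR: "length R = Suc (n - b)"
proof -
  have "length R = card {b..n}" using Rd Rs distinct_card by metis
  then show ?thesis using bn by simp
qed
lemma Ld: "distinct L" using Lp by (rule perms_distinct)
lemma Ls: "set L = {1..b}" using Lp by (rule perms_set)
lemma aL: "a = L!m"
proof -
  have "L \<noteq> []" using lL b2 by auto
  then show ?thesis using last_conv_nth[of L] lL by simp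
qed
lemma cR: "c = R!0"
proof -
  have "R \<noteq> []" using lR by auto
  then show ?thesis by (rule hd_conv_nth)
qed
lemma a_lt: "a < b" "1 \<le> a"
proof -
  have "a \<in> set L" using lL b2 by (simp add: aL)
  then show "a < b" "1 \<le> a" using Ls La by auto
qed
lemma c_gt: "b < c" "c \<le> n"
proof -
  have "c \<in> set R" using lR by (simp add: cR)
  then show "b < c" "c \<le> n" using Rs Rc by auto
qed
lemma lw: "length w = n" unfolding phi_def using lL lR b2 bn by simp

lemma w_left: "t < m \<Longrightarrow> w!t = f (L!t)"
  unfolding phi_def using lL by (simp add: nth_append nth_butlast)
lemma w_mid: "w!m = b"
  unfolding phi_def using lL by (simp add: nth_append)
lemma w_right: "m < t \<Longrightarrow> t < n \<Longrightarrow> w!t = g (R!(t-m))"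
proof -
  assume t: "m < t" "t < n"
  have "w!t = (b # map g (tl R)) ! (t - m)" unfolding phi_def using lL t by (simp add: nth_append)
  also have "\<dots> = map g (tl R) ! (t - m - 1)" using t by (simp add: nth_Cons')
  also have "\<dots> = g (tl R ! (t-m-1))" using t lR b2 by simp
  also have "tl R ! (t-m-1) = R ! (t-m)"
  proof -
    have "Suc (t-m-1) = t - m" using t by simp
    moreover have "t - m - 1 < length (tl R)" using t lR b2 by simp
    ultimately show ?thesis using nth_tl[of "t-m-1" R] by simp
  qed
  finally show ?thesis .
qed

lemma VL: assumes "t < m" shows "L!t \<noteq> a" "1 \<le> L!t" "L!t \<le> b"
proof -
  show "L!t \<noteq> a" unfolding aL using Ld lL assms nth_eq_iff_index_eq by fastforce
  have "L!t \<in> set L" using assms lL by simp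
  then show "1 \<le> L!t" "L!t \<le> b" using Ls by auto
qed
lemma VR: assumes "0 < s" "s < Suc (n-b)" shows "R!s \<noteq> c" "b \<le> R!s" "R!s \<le> n"
proof -
  show "R!s \<noteq> c" unfolding cR using Rd lR assms nth_eq_iff_index_eq by fastforce
  have "R!s \<in> set R" using assms lR by simp
  then show "b \<le> R!s" "R!s \<le> n" using Rs by auto
qed

lemma fL_cases: "t < m \<Longrightarrow> (L!t = b \<and> f (L!t) = c) \<or> (L!t < b \<and> f (L!t) = L!t \<and> L!t \<noteq> a)"
  using VL[of t] by auto
lemma gR_cases: "0 < s \<Longrightarrow> s < Suc (n-b) \<Longrightarrow> (R!s = b \<and> g (R!s) = a) \<or> (b < R!s \<and> g (R!s) = R!s \<and> R!s \<noteq> c)"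
  using VR[of s] by auto

lemma OL: "t < m \<Longrightarrow> t' < m \<Longrightarrow> (f (L!t) < f (L!t')) = (L!t < L!t')"
  using fL_cases[of t] fL_cases[of t'] c_gt by auto
lemma OR: "0 < s \<Longrightarrow> s < Suc (n-b) \<Longrightarrow> 0 < s' \<Longrightarrow> s' < Suc (n-b) \<Longrightarrow> (g (R!s) < g (R!s')) = (R!s < R!s')"
  using gR_cases[of s] gR_cases[of s'] a_lt by auto

lemma Linj: "t < b \<Longrightarrow> t' < b \<Longrightarrow> L!t = L!t' \<Longrightarrow> t = t'"
  using Ld lL nth_eq_iff_index_eq by metis
lemma Rinj: "s < Suc (n-b) \<Longrightarrow> s' < Suc (n-b) \<Longrightarrow> R!s = R!s' \<Longrightarrow> s = s'"
  using Rd lR nth_eq_iff_index_eq by metis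

lemma wv: assumes "t < n"
  shows "(t<m \<and> L!t = b \<and> w!t = c) \<or> (t<m \<and> L!t < b \<and> w!t = L!t \<and> L!t \<noteq> a \<and> 1 \<le> L!t) \<or> (t = m \<and> w!t = b)
       \<or> (m<t \<and> R!(t-m) = b \<and> w!t = a) \<or> (m<t \<and> b < R!(t-m) \<and> w!t = R!(t-m) \<and> R!(t-m) \<noteq> c \<and> R!(t-m) \<le> n)"
proof -
  consider "t < m" | "t = m" | "m < t" by linarith
  then show ?thesis
  proof cases
    case 1 then show ?thesis using fL_cases[of t] w_left[of t] VL[of t] by auto
  next
    case 2 then show ?thesis using w_mid by simp
  next
    case 3
    then have "0 < t - m" "t - m < Suc (n-b)" using assms b2 by auto
    then show ?thesis using 3 gR_cases[of "t-m"] w_right[of t] assms VR[of "t-m"] by auto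
  qed
qed

lemma left_ne_right: "t < m \<Longrightarrow> m < t' \<Longrightarrow> t' < n \<Longrightarrow> w!t \<noteq> w!t'"
proof -
  assume t: "t < m" "m < t'" "t' < n"
  then have s: "0 < t'-m" "t'-m < Suc (n-b)" by auto
  have wl: "w!t = f (L!t)" by (rule w_left[OF t(1)])
  have wr: "w!t' = g (R!(t'-m))" by (rule w_right[OF t(2,3)])
  show ?thesis unfolding wl wr
    using fL_cases[OF t(1)] gR_cases[OF s] a_lt c_gt by (elim disjE) auto
qed

lemma left_ne_mid: "t < m \<Longrightarrow> w!t \<noteq> b"
proof -
  assume t: "t < m"
  have wl: "w!t = f (L!t)" by (rule w_left[OF t])
  show ?thesis unfolding wl using fL_cases[OF t] c_gt by (elim disjE) auto
qed

lemma right_ne_mid: "m < t \<Longrightarrow> t < n \<Longrightarrow> w!t \<noteq> b"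
proof -
  assume t: "m < t" "t < n"
  then have s: "0 < t-m" "t-m < Suc (n-b)" by auto
  have wr: "w!t = g (R!(t-m))" by (rule w_right[OF t])
  show ?thesis unfolding wr using gR_cases[OF s] a_lt by (elim disjE) auto
qed

lemma left_inj: "t < m \<Longrightarrow> t' < m \<Longrightarrow> w!t = w!t' \<Longrightarrow> t = t'"
proof -
  assume t: "t < m" "t' < m" "w!t = w!t'"
  then have "f (L!t) = f (L!t')" using w_left by simp
  then have "\<not> L!t < L!t'" "\<not> L!t' < L!t" using OL[OF t(1,2)] OL[OF t(2,1)] by auto
  then have "L!t = L!t'" by simp
  then show ?thesis using Linj t by simp
qed

lemma right_inj: "m < t \<Longrightarrow> t < n \<Longrightarrow> m < t' \<Longrightarrow> t' < n \<Longrightarrow> w!t = w!t' \<Longrightarrow> t = t'"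
proof -
  assume t: "m < t" "t < n" "m < t'" "t' < n" "w!t = w!t'"
  then have s: "0 < t-m" "t-m < Suc (n-b)" "0 < t'-m" "t'-m < Suc (n-b)" by auto
  have "g (R!(t-m)) = g (R!(t'-m))" using w_right t by simp
  then have "\<not> R!(t-m) < R!(t'-m)" "\<not> R!(t'-m) < R!(t-m)" using OR[OF s] OR[OF s(3,4,1,2)] by auto
  then have "R!(t-m) = R!(t'-m)" by simp
  then have "t - m = t' - m" using Rinj s by simp
  then show ?thesis using t by simp
qed

lemma w_range: "t < n \<Longrightarrow> 1 \<le> w!t \<and> w!t \<le> n"
proof -
  assume t: "t < n"
  consider "t < m" | "t = m" | "m < t" by linarith
  then show ?thesis
  proof cases
    case 1
    have wl: "w!t = f (L!t)" by (rule w_left[OF 1])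
    show ?thesis unfolding wl using VL[OF 1] c_gt bn by simp
  next
    case 2 then show ?thesis using w_mid b2 bn by simp
  next
    case 3
    have wr: "w!t = g (R!(t-m))" by (rule w_right[OF 3 t])
    have "0 < t - m" "t - m < Suc (n-b)" using 3 t by auto
    then show ?thesis unfolding wr using VR[of "t-m"] a_lt bn by simp
  qed
qed

lemma w_perm: "w \<in> perms n"
proof (rule perms_intro)
  show "length w = n" by (rule lw)
  show "set w \<subseteq> {1..n}"
  proof
    fix x assume "x \<in> set w"
    then obtain t where t0: "t < length w" "w!t = x" unfolding in_set_conv_nth by blast
    then show "x \<in> {1..n}" using w_range[of t] lw by simp
  qed
  show "distinct w"
    unfolding distinct_conv_nth lw
  proof (intro allI impI)
    fix t t' assume tt: "t < n" "t' < n" "t \<noteq> t'"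
    have c1: "t < m \<or> t = m \<or> m < t" and c2: "t' < m \<or> t' = m \<or> m < t'" by auto
    consider "t < m" "t' < m" | "t < m" "t' = m" | "t < m" "m < t'" | "t = m" "t' < m" | "t = m" "m < t'"
      | "m < t" "t' < m" | "m < t" "t' = m" | "m < t" "m < t'" | "t = m" "t' = m"
      using c1 c2 by blast
    then show "w!t \<noteq> w!t'"
    proof cases
      case 1 then show ?thesis using left_inj[OF 1] tt(3) by blast
    next
      case 2 then show ?thesis using left_ne_mid[OF 2(1)] w_mid 2(2) by simp
    next
      case 3 then show ?thesis using left_ne_right[OF 3 tt(2)] by simp
    next
      case 4 then show ?thesis using left_ne_mid[OF 4(2)] w_mid 4(1) by simp
    next
      case 5 then show ?thesis using right_ne_mid[OF 5(2) tt(2)] w_mid 5(1) by simp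
    next
      case 6 then show ?thesis using left_ne_right[OF 6(2,1) tt(1)] by simp
    next
      case 7 then show ?thesis using right_ne_mid[OF 7(1) tt(1)] w_mid 7(2) by simp
    next
      case 8 then show ?thesis using right_inj[OF 8(1) tt(1) 8(2) tt(2)] tt(3) by blast
    next
      case 9 then show ?thesis using tt by simp
    qed
  qed
qed

lemma left_le_c: "t < m \<Longrightarrow> w!t \<le> c"
proof -
  assume t: "t < m"
  have wl: "w!t = f (L!t)" by (rule w_left[OF t])
  show ?thesis unfolding wl using fL_cases[OF t] c_gt by (elim disjE) auto
qed
lemma left_gt_b: "t < m \<Longrightarrow> b < w!t \<Longrightarrow> L!t = b \<and> w!t = c"
proof -
  assume t: "t < m" "b < w!t"
  have wl: "w!t = f (L!t)" by (rule w_left[OF t(1)])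
  show ?thesis using t(2) unfolding wl using fL_cases[OF t(1)] by (elim disjE) auto
qed
lemma left_lt_b: "t < m \<Longrightarrow> w!t < b \<Longrightarrow> w!t = L!t"
proof -
  assume t: "t < m" "w!t < b"
  have wl: "w!t = f (L!t)" by (rule w_left[OF t(1)])
  show ?thesis using t(2) unfolding wl using fL_cases[OF t(1)] c_gt by (elim disjE) auto
qed
lemma right_lt_b: "m < t \<Longrightarrow> t < n \<Longrightarrow> w!t < b \<Longrightarrow> R!(t-m) = b \<and> w!t = a"
proof -
  assume t: "m < t" "t < n" "w!t < b"
  define s where "s = t - m"
  have wr: "w!t = g (R!s)" unfolding s_def by (rule w_right[OF t(1,2)])
  have s: "0 < s" "s < Suc (n-b)" using t unfolding s_def by auto
  show ?thesis using t(3) unfolding wr s_def[symmetric] using gR_cases[OF s] by (elim disjE) auto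
qed
lemma right_gt_b: "m < t \<Longrightarrow> t < n \<Longrightarrow> b < w!t \<Longrightarrow> w!t = R!(t-m)"
proof -
  assume t: "m < t" "t < n" "b < w!t"
  define s where "s = t - m"
  have wr: "w!t = g (R!s)" unfolding s_def by (rule w_right[OF t(1,2)])
  have s: "0 < s" "s < Suc (n-b)" using t unfolding s_def by auto
  show ?thesis using t(3) unfolding wr s_def[symmetric] using gR_cases[OF s] a_lt by (elim disjE) auto
qed
lemma right_ge_a: "m < t \<Longrightarrow> t < n \<Longrightarrow> a \<le> w!t"
proof -
  assume t: "m < t" "t < n"
  define s where "s = t - m"
  have wr: "w!t = g (R!s)" unfolding s_def by (rule w_right[OF t(1,2)])
  have s: "0 < s" "s < Suc (n-b)" using t unfolding s_def by auto
  show ?thesis unfolding wr using gR_cases[OF s] a_lt by (elim disjE) auto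
qed

lemma occL: "(x,y,z) \<in> occ321 L \<Longrightarrow> False"
  using Lav unfolding avoids321_def by auto
lemma occR: "(x,y,z) \<in> occ321 R \<Longrightarrow> False"
  using Rav unfolding avoids321_def by auto

lemma w_occ: "\<exists>i0 k0. occ321 w = {(i0, m, k0)}"
proof -
  have "b \<in> set L" using Ls b2 by simp
  then obtain i0 where i0: "i0 < b" "L!i0 = b" using lL by (auto simp: in_set_conv_nth)
  have "i0 \<noteq> m" using i0 La aL by auto
  then have i0m: "i0 < m" using i0 by simp
  have "b \<in> set R" using Rs bn by simp
  then obtain s0 where s0: "s0 < Suc (n-b)" "R!s0 = b" using lR by (auto simp: in_set_conv_nth)
  have "s0 \<noteq> 0"
  proof
    assume "s0 = 0" then show False using s0(2) Rc cR by simp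
  qed
  then have s0p: "0 < s0" by simp
  define k0 where "k0 = m + s0"
  have k0: "m < k0" "k0 < n" "k0 - m = s0" unfolding k0_def using s0p s0 b2 bn by auto
  have wi0: "w!i0 = c" using w_left[OF i0m] i0 by simp
  have wk0: "w!k0 = a" using w_right[OF k0(1,2)] k0(3) s0 by simp
  have "occ321 w = {(i0, m, k0)}"
  proof (rule set_eqI, rule iffI)
    fix x assume "x \<in> {(i0, m, k0)}"
    then show "x \<in> occ321 w" unfolding occ321_def using i0m k0 wi0 wk0 w_mid c_gt a_lt lw by auto
  next
    fix x assume x: "x \<in> occ321 w"
    obtain p q r where xe: "x = (p,q,r)" by (cases x) auto
    have o: "p < q" "q < r" "r < n" "w!p > w!q" "w!q > w!r" using x lw unfolding xe occ321_def by auto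
    have cases: "r < m \<or> r = m \<or> (q < m \<and> m < r) \<or> q = m \<or> (p < m \<and> m < q) \<or> p = m \<or> m < p"
      using o by auto
    show "x \<in> {(i0, m, k0)}"
    proof -
      { assume r: "r < m"
        have "p < m" "q < m" using o r by auto
        then have "L!q < L!p" "L!r < L!q" using OL o r w_left by auto
        then have "(p,q,r) \<in> occ321 L" unfolding occ321_def using o r lL by auto
        then have False by (rule occL) }
      moreover
      { assume r: "r = m"
        have q: "q < m" using o r by auto
        then have "w!q = c" using left_gt_b[OF q] o r w_mid by auto
        moreover have "w!p \<le> c" using left_le_c o q by auto
        ultimately have False using o by simp }
      moreover
      { assume qr: "q < m \<and> m < r"
        have p: "p < m" using o qr by auto
        have "\<not> b < w!q"
        proof
          assume "b < w!q"
          then have "w!q = c" using left_gt_b qr by auto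
          then show False using left_le_c[OF p] o by simp
        qed
        moreover have "w!q \<noteq> b" using left_ne_mid qr by auto
        ultimately have wq: "w!q < b" by simp
        then have lq: "L!q = w!q" using left_lt_b qr by auto
        have "w!r = a" using right_lt_b[of r] qr o wq by auto
        have "L!q < L!p" using OL[of q p] o p qr w_left by auto
        moreover have "L!m < L!q" using lq aL o \<open>w!r = a\<close> by simp
        ultimately have "(p,q,m) \<in> occ321 L" unfolding occ321_def using p qr o(1) lL b2 by auto
        then have False by (rule occL) }
      moreover
      { assume q: "q = m"
        have "w!p > b" using o q w_mid by simp
        then have "L!p = b" using left_gt_b o q by auto
        then have "p = i0" using Linj[of p i0] i0 o q by auto
        moreover have "w!r < b" using o q w_mid by simp
        then have "R!(r-m) = b" using right_lt_b o q by auto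
        then have "r - m = s0" using Rinj[of "r-m" s0] s0 o q by auto
        then have "r = k0" using k0 o q by auto
        ultimately have "x \<in> {(i0, m, k0)}" using xe q by simp }
      moreover
      { assume pq: "p < m \<and> m < q"
        have "\<not> w!q < b"
        proof
          assume "w!q < b"
          then have "w!q = a" using right_lt_b pq o by auto
          then show False using right_ge_a[of r] pq o by auto
        qed
        moreover have "w!q \<noteq> b" using right_ne_mid pq o by auto
        ultimately have wq: "b < w!q" by simp
        then have rq: "w!q = R!(q-m)" using right_gt_b pq o by auto
        have "w!p = c" using left_gt_b[of p] pq o wq by auto
        then have "R!(q-m) < R!0" using o rq cR by simp
        moreover have "R!(r-m) < R!(q-m)"
        proof -
          have s: "0 < q - m" "q - m < Suc (n-b)" "0 < r - m" "r - m < Suc (n-b)" using pq o by auto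
          have "g (R!(r-m)) < g (R!(q-m))" using o w_right[of q] w_right[of r] pq by auto
          then show ?thesis using OR[OF s(3,4,1,2)] by simp
        qed
        ultimately have "(0, q-m, r-m) \<in> occ321 R" unfolding occ321_def using pq o lR by auto
        then have False by (rule occR) }
      moreover
      { assume p: "p = m"
        have "w!q < b" using o p w_mid by simp
        then have "w!q = a" using right_lt_b p o by auto
        then have False using right_ge_a[of r] p o by auto }
      moreover
      { assume p: "m < p"
        have s: "0 < p - m" "p - m < Suc (n-b)" "0 < q - m" "q - m < Suc (n-b)" "0 < r - m" "r - m < Suc (n-b)"
          using p o by auto
        have "g (R!(q-m)) < g (R!(p-m))" "g (R!(r-m)) < g (R!(q-m))" using o w_right p by auto
        then have "R!(q-m) < R!(p-m)" "R!(r-m) < R!(q-m)" using OR[OF s(3,4,1,2)] OR[OF s(5,6,3,4)] by auto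
        moreover have "p - m < q - m" "q - m < r - m" using p o by auto
        ultimately have "(p-m, q-m, r-m) \<in> occ321 R" unfolding occ321_def using s(6) lR by simp
        then have False by (rule occR) }
      ultimately show ?thesis using cases by blast
    qed
  qed
  then show ?thesis by blast
qed

lemma max_w: "Max (set (take m w)) = c"
proof (rule Max_eqI)
  show "finite (set (take m w))" by simp
  fix y assume "y \<in> set (take m w)"
  then obtain t where "t < length (take m w)" "take m w ! t = y" unfolding in_set_conv_nth by blast
  then have "t < m" "w!t = y" using lw bn by auto
  then show "y \<le> c" using left_le_c by auto
next
  have "b \<in> set L" using Ls b2 by simp
  then obtain i0 where i0: "i0 < b" "L!i0 = b" using lL by (auto simp: in_set_conv_nth)
  have "i0 \<noteq> m" using i0 La aL by auto
  then have i0m: "i0 < m" using i0 by simp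
  have "w!i0 = c" using w_left[OF i0m] i0 by simp
  then have "take m w ! i0 = c" using i0m by simp
  moreover have "i0 < length (take m w)" using i0m lw bn by simp
  ultimately show "c \<in> set (take m w)" by (metis nth_mem)
qed

lemma min_w: "Min (set (drop b w)) = a"
proof (rule Min_eqI)
  show "finite (set (drop b w))" by simp
  fix y assume "y \<in> set (drop b w)"
  then obtain s where "s < length (drop b w)" "drop b w ! s = y" unfolding in_set_conv_nth by blast
  then have "b + s < n" "w!(b+s) = y" using lw bn by auto
  then show "a \<le> y" using right_ge_a[of "b+s"] b2 by auto
next
  have "b \<in> set R" using Rs bn by simp
  then obtain s0 where s0: "s0 < Suc (n-b)" "R!s0 = b" using lR by (auto simp: in_set_conv_nth)
  have "s0 \<noteq> 0"
  proof
    assume "s0 = 0" then show False using s0(2) Rc cR by simp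
  qed
  then have k: "m < m + s0" "m + s0 < n" using s0 b2 bn by auto
  have "w!(m+s0) = a" using w_right[OF k] s0 by simp
  moreover have "drop b w ! (s0 - 1) = w!(m+s0)" using \<open>s0 \<noteq> 0\<close> k lw b2 by simp
  moreover have "s0 - 1 < length (drop b w)" using k lw b2 by simp
  ultimately show "a \<in> set (drop b w)" by (metis nth_mem)
qed

lemma psiL_phi: "psiL b w = L"
proof -
  have "map (\<lambda>x. if x = c then b else x) (take m w) = butlast L"
  proof (rule nth_equalityI)
    show "length (map (\<lambda>x. if x = c then b else x) (take m w)) = length (butlast L)" using lw lL bn by simp
    fix t assume "t < length (map (\<lambda>x. if x = c then b else x) (take m w))"
    then have t: "t < m" using lw bn by simp
    have wt: "w!t = f (L!t)" by (rule w_left[OF t])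
    have e1: "map (\<lambda>x. if x = c then b else x) (take m w) ! t = (if w!t = c then b else w!t)"
      using t lw bn by simp
    have bl: "butlast L ! t = L!t" using t lL by (simp add: nth_butlast)
    show "map (\<lambda>x. if x = c then b else x) (take m w) ! t = butlast L ! t"
      unfolding e1 bl wt using fL_cases[OF t] c_gt by (elim disjE) simp_all
  qed
  then have "psiL b w = butlast L @ [a]" unfolding psiL_def max_w min_w by simp
  also have "\<dots> = L" using lL b2 by (metis append_butlast_last_id list.size(3) not_numeral_le_zero)
  finally show ?thesis .
qed

lemma psiR_phi: "psiR b w = R"
proof -
  have "map (\<lambda>y. if y = a then b else y) (drop b w) = tl R"
  proof (rule nth_equalityI)
    show "length (map (\<lambda>y. if y = a then b else y) (drop b w)) = length (tl R)" using lw lR bn by simp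
    fix s assume "s < length (map (\<lambda>y. if y = a then b else y) (drop b w))"
    then have s: "s < n - b" using lw bn by simp
    have t: "m < b + s" "b + s < n" using s b2 by auto
    have bs: "b + s - m = Suc s" using b2 by simp
    have wt: "w!(b+s) = g (R!(Suc s))" using w_right[OF t] unfolding bs .
    have ss: "0 < Suc s" "Suc s < Suc (n-b)" using s by auto
    have e1: "map (\<lambda>y. if y = a then b else y) (drop b w) ! s = (if w!(b+s) = a then b else w!(b+s))"
      using s lw bn by simp
    have tl: "tl R ! s = R ! Suc s" using s lR by (simp add: nth_tl)
    show "map (\<lambda>y. if y = a then b else y) (drop b w) ! s = tl R ! s"
      unfolding e1 tl wt using gR_cases[OF ss] a_lt by (elim disjE) simp_all
  qed
  then have "psiR b w = c # tl R" unfolding psiR_def max_w min_w by simp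
  also have "\<dots> = R" using lR by (cases R) auto
  finally show ?thesis .
qed

end


locale psictx =
  fixes n b :: nat and w :: "nat list" and i k :: nat
  assumes wp: "w \<in> perms n" and occ: "occ321 w = {(i, b-1, k)}"
begin

abbreviation "m \<equiv> b - 1"
abbreviation "c \<equiv> w!i"
abbreviation "a \<equiv> w!k"

lemma st: "w!m = Suc m" "\<And>p. p < m \<Longrightarrow> p \<noteq> i \<Longrightarrow> w!p < w!m"
    "\<And>r. m < r \<Longrightarrow> r < n \<Longrightarrow> r \<noteq> k \<Longrightarrow> w!r > w!m"
    "i < m" "m < k" "k < n" "w!i > w!m" "w!m > w!k"
  using once_struct[OF wp occ] by auto

lemma b2: "2 \<le> b" using st(4) by simp
lemma bm: "b = Suc m" using b2 by simp
lemma wm: "w!m = b" using st(1) bm by simp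
lemma lw: "length w = n" using wp by (rule perms_length)
lemma dw: "distinct w" using wp by (rule perms_distinct)
lemma bn: "b < n" using st(5,6) bm by simp
lemma rng: "t < n \<Longrightarrow> 1 \<le> w!t \<and> w!t \<le> n" using perms_nth_range[OF wp] by simp
lemma winj: "t < n \<Longrightarrow> t' < n \<Longrightarrow> w!t = w!t' \<Longrightarrow> t = t'"
  using dw lw nth_eq_iff_index_eq by metis

lemma c_gt: "b < c" "c \<le> n" using st(7) wm rng[of i] st(4,5,6) by auto
lemma a_lt: "a < b" "1 \<le> a" using st(8) wm rng[of k] st(6) by auto
lemma vL: "t < m \<Longrightarrow> t \<noteq> i \<Longrightarrow> 1 \<le> w!t \<and> w!t < b"
  using st(2)[of t] wm rng[of t] st(5,6) by auto
lemma vR: "m < t \<Longrightarrow> t < n \<Longrightarrow> t \<noteq> k \<Longrightarrow> b < w!t \<and> w!t \<le> n"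
  using st(3)[of t] wm rng[of t] by auto

lemma max_w: "Max (set (take m w)) = c"
proof (rule Max_eqI)
  show "finite (set (take m w))" by simp
  fix y assume "y \<in> set (take m w)"
  then obtain t where "t < length (take m w)" "take m w ! t = y" unfolding in_set_conv_nth by blast
  then have t: "t < m" "w!t = y" using lw bn by auto
  show "y \<le> c"
  proof (cases "t = i")
    case True then show ?thesis using t by simp
  next
    case False then show ?thesis using vL[OF t(1) False] t c_gt by simp
  qed
next
  have "take m w ! i = c" "i < length (take m w)" using st(4) lw bn by auto
  then show "c \<in> set (take m w)" by (metis nth_mem)
qed

lemma min_w: "Min (set (drop b w)) = a"
proof (rule Min_eqI)
  show "finite (set (drop b w))" by simp
  fix y assume "y \<in> set (drop b w)"
  then obtain s where "s < length (drop b w)" "drop b w ! s = y" unfolding in_set_conv_nth by blast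
  then have t: "b + s < n" "w!(b+s) = y" using lw bn by auto
  show "a \<le> y"
  proof (cases "b + s = k")
    case True then show ?thesis using t by simp
  next
    case False
    have mb: "m < b + s" using b2 by simp
    show ?thesis using vR[OF mb t(1) False] t a_lt by simp
  qed
next
  have "drop b w ! (k - b) = a" "k - b < length (drop b w)" using st(5,6) lw bm by auto
  then show "a \<in> set (drop b w)" by (metis nth_mem)
qed

abbreviation "Lw \<equiv> psiL b w"
abbreviation "Rw \<equiv> psiR b w"

lemma lLw: "length Lw = b" unfolding psiL_def using lw bn bm by simp
lemma lRw: "length Rw = Suc (n - b)" unfolding psiR_def using lw bn by simp

lemma Lw_nth: "t < m \<Longrightarrow> Lw!t = (if t = i then b else w!t)"
proof -
  assume t: "t < m"
  have "Lw!t = (if w!t = c then b else w!t)" unfolding psiL_def max_w using t lw bn by (simp add: nth_append)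
  moreover have "w!t = c \<longleftrightarrow> t = i" using winj[of t i] t st(4) bn by auto
  ultimately show ?thesis by simp
qed
lemma Lw_last: "Lw!m = a" unfolding psiL_def min_w using lw bn by (simp add: nth_append)

lemma Rw_0: "Rw!0 = c" unfolding psiR_def max_w by simp
lemma Rw_nth: "0 < s \<Longrightarrow> s < Suc (n-b) \<Longrightarrow> Rw!s = (if m + s = k then b else w!(m+s))"
proof -
  assume s: "0 < s" "s < Suc (n-b)"
  have "Rw!s = (if drop b w ! (s-1) = a then b else drop b w ! (s-1))"
    unfolding psiR_def min_w using s lw bn by (simp add: nth_Cons')
  moreover have "drop b w ! (s-1) = w!(m+s)" using s lw bn bm by simp
  moreover have "w!(m+s) = a \<longleftrightarrow> m + s = k" using winj[of "m+s" k] s st(6) bm bn by auto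
  ultimately show ?thesis by simp
qed

lemma occw: "(p,q,r) \<in> occ321 w \<Longrightarrow> q = m" using occ by auto

lemma Lw_perm: "Lw \<in> perms b"
proof (rule perms_intro)
  show "length Lw = b" by (rule lLw)
  have val: "t < b \<Longrightarrow> 1 \<le> Lw!t \<and> Lw!t \<le> b" for t
  proof -
    assume t: "t < b"
    show ?thesis
    proof (cases "t = m")
      case True then show ?thesis using Lw_last a_lt by simp
    next
      case False
      then have t': "t < m" using t bm by simp
      show ?thesis using Lw_nth[OF t'] vL[OF t'] b2 by (cases "t = i") auto
    qed
  qed
  show "set Lw \<subseteq> {1..b}"
  proof
    fix x assume "x \<in> set Lw"
    then obtain t where "t < length Lw" "Lw!t = x" unfolding in_set_conv_nth by blast
    then show "x \<in> {1..b}" using val[of t] lLw by auto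
  qed
  show "distinct Lw" unfolding distinct_conv_nth lLw
  proof (intro allI impI)
    fix t t' assume tt: "t < b" "t' < b" "t \<noteq> t'"
    show "Lw!t \<noteq> Lw!t'"
    proof (cases "t = m \<or> t' = m")
      case True
      then consider "t = m" "t' < m" | "t' = m" "t < m" using tt bm by auto
      then show ?thesis
      proof cases
        case 1 then show ?thesis using Lw_nth[of t'] Lw_last a_lt st(4,5,6) winj[of k t'] bn by auto
      next
        case 2 then show ?thesis using Lw_nth[of t] Lw_last a_lt st(4,5,6) winj[of k t] bn by auto
      qed
    next
      case False
      then have t: "t < m" "t' < m" using tt bm by auto
      show ?thesis using Lw_nth[OF t(1)] Lw_nth[OF t(2)] vL[OF t(1)] vL[OF t(2)] winj[of t t'] tt bn by auto
    qed
  qed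
qed

lemma Lw_ord: "t < m \<Longrightarrow> t' < m \<Longrightarrow> (Lw!t < Lw!t') = (w!t < w!t')"
proof -
  assume t: "t < m" "t' < m"
  show ?thesis using Lw_nth[OF t(1)] Lw_nth[OF t(2)] vL[OF t(1)] vL[OF t(2)] c_gt
    by (cases "t = i"; cases "t' = i") auto
qed
lemma Lw_ord_a: "t < m \<Longrightarrow> (a < Lw!t) = (a < w!t)"
proof -
  assume t: "t < m"
  show ?thesis using Lw_nth[OF t] a_lt c_gt by (cases "t = i") auto
qed

lemma Lw_av: "avoids321 Lw"
  unfolding avoids321_def
proof (rule ccontr)
  assume "occ321 Lw \<noteq> {}"
  then obtain p q r where o: "(p,q,r) \<in> occ321 Lw" by auto
  then have o': "p < q" "q < r" "r < b" "Lw!p > Lw!q" "Lw!q > Lw!r" unfolding occ321_def lLw by auto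
  have pq: "p < m" "q < m" using o' bm by auto
  have wpq: "w!p > w!q" using Lw_ord[OF pq(2,1)] o' by simp
  show False
  proof (cases "r = m")
    case True
    have "a < w!q" using Lw_ord_a[OF pq(2)] o' True Lw_last by simp
    then have "(p,q,k) \<in> occ321 w" unfolding occ321_def using o' wpq pq st(5,6) lw by auto
    then show False using occw pq by auto
  next
    case False
    then have r: "r < m" using o' bm by simp
    have "w!q > w!r" using Lw_ord[OF r pq(2)] o' by simp
    then have "(p,q,r) \<in> occ321 w" unfolding occ321_def using o' wpq r st(5,6) lw bn by auto
    then show False using occw pq by auto
  qed
qed

lemma Lw_last': "last Lw \<noteq> b"
proof -
  have "Lw \<noteq> []" using lLw b2 by auto
  then have "last Lw = Lw!(length Lw - 1)" by (rule last_conv_nth)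
  then have "last Lw = Lw!m" using lLw by simp
  then show ?thesis using Lw_last a_lt by simp
qed

lemma Rw_val: "s < Suc (n-b) \<Longrightarrow> b \<le> Rw!s \<and> Rw!s \<le> n \<and> (0 < s \<longrightarrow> Rw!s \<noteq> c)"
proof -
  assume s: "s < Suc (n-b)"
  show ?thesis
  proof (cases "s = 0")
    case True then show ?thesis using Rw_0 c_gt by simp
  next
    case False
    then have s0: "0 < s" by simp
    have mt: "m < m + s" "m + s < n" using s0 s bn b2 by auto
    show ?thesis
    proof (cases "m + s = k")
      case True then show ?thesis using Rw_nth[OF s0 s] c_gt bn by simp
    next
      case False
      have "m + s \<noteq> i" using st(4) by simp
      then have "w!(m+s) \<noteq> c" using winj[of "m+s" i] mt st(4) bn by auto
      then show ?thesis using Rw_nth[OF s0 s] vR[OF mt False] False by simp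
    qed
  qed
qed

lemma Rw_distinct: "distinct Rw" unfolding distinct_conv_nth lRw
proof (intro allI impI)
  fix s s' assume ss: "s < Suc (n-b)" "s' < Suc (n-b)" "s \<noteq> s'"
  show "Rw!s \<noteq> Rw!s'"
  proof (cases "s = 0 \<or> s' = 0")
    case True
    then consider "s = 0" "0 < s'" | "s' = 0" "0 < s" using ss by auto
    then show ?thesis
    proof cases
      case 1 then show ?thesis using Rw_0 Rw_val[OF ss(2)] by auto
    next
      case 2 then show ?thesis using Rw_0 Rw_val[OF ss(1)] by auto
    qed
  next
    case False
    then have s: "0 < s" "0 < s'" by auto
    have mt: "m + s < n" "m + s' < n" using ss bn b2 by auto
    have "w!(m+s) \<noteq> w!(m+s')" using winj[OF mt] ss by auto
    moreover have "m + s = k \<Longrightarrow> m + s' \<noteq> k" using ss by auto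
    moreover have "m + s \<noteq> k \<Longrightarrow> b < w!(m+s)" using vR[of "m+s"] mt s by auto
    moreover have "m + s' \<noteq> k \<Longrightarrow> b < w!(m+s')" using vR[of "m+s'"] mt s by auto
    ultimately show ?thesis using Rw_nth[OF s(1) ss(1)] Rw_nth[OF s(2) ss(2)] by auto
  qed
qed

lemma Rw_set: "set Rw = {b..n}"
proof -
  have sub: "set Rw \<subseteq> {b..n}"
  proof
    fix x assume "x \<in> set Rw"
    then obtain s where "s < length Rw" "Rw!s = x" unfolding in_set_conv_nth by blast
    then show "x \<in> {b..n}" using Rw_val[of s] lRw by auto
  qed
  have "card (set Rw) = Suc (n - b)" using Rw_distinct distinct_card lRw by metis
  also have "\<dots> = card {b..n}" using bn by simp
  finally show ?thesis using sub by (simp add: card_subset_eq)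
qed

lemma Rw_hd: "hd Rw \<noteq> b" unfolding psiR_def max_w using c_gt by simp

lemma Rw_ord: "0 < s \<Longrightarrow> s < Suc (n-b) \<Longrightarrow> 0 < s' \<Longrightarrow> s' < Suc (n-b) \<Longrightarrow> (Rw!s < Rw!s') = (w!(m+s) < w!(m+s'))"
proof -
  assume ss: "0 < s" "s < Suc (n-b)" "0 < s'" "s' < Suc (n-b)"
  have mt: "m < m + s" "m + s < n" "m < m + s'" "m + s' < n" using ss bn b2 by auto
  show ?thesis using Rw_nth[OF ss(1,2)] Rw_nth[OF ss(3,4)] vR[OF mt(1,2)] vR[OF mt(3,4)] a_lt
    by (cases "m + s = k"; cases "m + s' = k") auto
qed
lemma Rw_ord_c: "0 < s \<Longrightarrow> s < Suc (n-b) \<Longrightarrow> (Rw!s < c) = (w!(m+s) < c)"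
proof -
  assume ss: "0 < s" "s < Suc (n-b)"
  show ?thesis using Rw_nth[OF ss] a_lt c_gt by (cases "m + s = k") auto
qed

lemma Rw_av: "avoids321 Rw"
  unfolding avoids321_def
proof (rule ccontr)
  assume "occ321 Rw \<noteq> {}"
  then obtain p q r where o: "(p,q,r) \<in> occ321 Rw" by auto
  then have o': "p < q" "q < r" "r < Suc (n-b)" "Rw!p > Rw!q" "Rw!q > Rw!r" unfolding occ321_def lRw by auto
  have qr: "0 < q" "q < Suc (n-b)" "0 < r" "r < Suc (n-b)" using o' by auto
  have wqr: "w!(m+q) > w!(m+r)" using Rw_ord[OF qr(3,4,1,2)] o' by simp
  have mr: "m + r < n" using qr bn b2 by auto
  show False
  proof (cases "p = 0")
    case True
    have "w!(m+q) < c" using Rw_ord_c[OF qr(1,2)] o' True Rw_0 by simp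
    then have "(i, m+q, m+r) \<in> occ321 w" unfolding occ321_def using o' wqr st(4) mr lw by auto
    then have "m + q = m" by (rule occw)
    then show False using qr by simp
  next
    case False
    then have p: "0 < p" "p < Suc (n-b)" using o' by auto
    have "w!(m+p) > w!(m+q)" using Rw_ord[OF qr(1,2) p] o' by simp
    then have "(m+p, m+q, m+r) \<in> occ321 w" unfolding occ321_def using o' wqr mr lw by auto
    then have "m + q = m" by (rule occw)
    then show False using qr by simp
  qed
qed

lemma phi_psi: "phi b Lw Rw = w"
proof -
  have bL: "butlast Lw = map (\<lambda>x. if x = c then b else x) (take m w)" unfolding psiL_def max_w by simp
  have lL: "last Lw = a" unfolding psiL_def min_w by simp
  have hR: "hd Rw = c" unfolding psiR_def max_w by simp
  have tR: "tl Rw = map (\<lambda>y. if y = a then b else y) (drop b w)" unfolding psiR_def min_w by simp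
  have e1: "map (\<lambda>x. if x = b then c else x) (map (\<lambda>x. if x = c then b else x) (take m w)) = take m w"
  proof (rule nth_equalityI)
    show "length (map (\<lambda>x. if x = b then c else x) (map (\<lambda>x. if x = c then b else x) (take m w))) = length (take m w)" by simp
    fix t assume "t < length (map (\<lambda>x. if x = b then c else x) (map (\<lambda>x. if x = c then b else x) (take m w)))"
    then have t: "t < m" using lw bn by simp
    have "w!t = c \<longleftrightarrow> t = i" using winj[of t i] t st(4) bn by auto
    moreover have "map (\<lambda>x. if x = b then c else x) (map (\<lambda>x. if x = c then b else x) (take m w)) ! t
        = (\<lambda>x. if x = b then c else x) ((\<lambda>x. if x = c then b else x) (w!t))" "take m w ! t = w!t"
      using t lw bn by simp_all
    ultimately show "map (\<lambda>x. if x = b then c else x) (map (\<lambda>x. if x = c then b else x) (take m w)) ! t = take m w ! t"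
      using t vL[OF t] c_gt by (cases "t = i") auto
  qed
  have e2: "map (\<lambda>y. if y = b then a else y) (map (\<lambda>y. if y = a then b else y) (drop b w)) = drop b w"
  proof (rule nth_equalityI)
    show "length (map (\<lambda>y. if y = b then a else y) (map (\<lambda>y. if y = a then b else y) (drop b w))) = length (drop b w)" by simp
    fix s assume "s < length (map (\<lambda>y. if y = b then a else y) (map (\<lambda>y. if y = a then b else y) (drop b w)))"
    then have s: "b + s < n" using lw bn by simp
    have mt: "m < b + s" using b2 by simp
    have "w!(b+s) = a \<longleftrightarrow> b + s = k" using winj[of "b+s" k] s st(6) by auto
    moreover have "map (\<lambda>y. if y = b then a else y) (map (\<lambda>y. if y = a then b else y) (drop b w)) ! s
        = (\<lambda>y. if y = b then a else y) ((\<lambda>y. if y = a then b else y) (w!(b+s)))" "drop b w ! s = w!(b+s)"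
      using s lw bn by simp_all
    ultimately show "map (\<lambda>y. if y = b then a else y) (map (\<lambda>y. if y = a then b else y) (drop b w)) ! s = drop b w ! s"
      using s vR[OF mt s] a_lt lw by (cases "b + s = k") auto
  qed
  have "phi b Lw Rw = take m w @ b # drop b w"
    unfolding phi_def bL lL hR tR e1 e2 ..
  also have "\<dots> = take m w @ w!m # drop (Suc m) w" using wm bm by simp
  also have "\<dots> = w" using id_take_nth_drop[of m w] lw bn by simp
  finally show ?thesis .
qed

end


definition LS :: "nat \<Rightarrow> nat list set" where
  "LS b = {L \<in> perms b. avoids321 L \<and> last L \<noteq> b}"
definition RS :: "nat \<Rightarrow> nat \<Rightarrow> nat list set" where
  "RS n b = {R. distinct R \<and> set R = {b..n} \<and> avoids321 R \<and> hd R \<noteq> b}"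
definition OS :: "nat \<Rightarrow> nat \<Rightarrow> nat list set" where
  "OS n b = {w \<in> perms n. card (occ321 w) = 1 \<and> (\<exists>i k. (i, b-1, k) \<in> occ321 w)}"

lemma OS_single:
  assumes "w \<in> OS n b" obtains i k where "w \<in> perms n" "occ321 w = {(i, b-1, k)}"
proof -
  from assms obtain i k where w: "w \<in> perms n" "card (occ321 w) = 1" "(i, b-1, k) \<in> occ321 w"
    unfolding OS_def by auto
  from w(2) obtain x where "occ321 w = {x}" by (rule card_1_singletonE)
  then have "occ321 w = {(i, b-1, k)}" using w(3) by auto
  then show ?thesis using that w(1) by blast
qed

lemma bij_OS:
  assumes b2: "2 \<le> b" and bn: "b < n"
  shows "bij_betw (\<lambda>(L,R). phi b L R) (LS b \<times> RS n b) (OS n b)"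
proof (rule bij_betw_byWitness[where f' = "\<lambda>w. (psiL b w, psiR b w)"])
  show "\<forall>x\<in>LS b \<times> RS n b. (\<lambda>w. (psiL b w, psiR b w)) ((\<lambda>(L,R). phi b L R) x) = x"
  proof
    fix x assume x: "x \<in> LS b \<times> RS n b"
    obtain L R where xe: "x = (L,R)" by (cases x)
    have "phictx n b L R" unfolding phictx_def using x xe b2 bn unfolding LS_def RS_def by auto
    then show "(\<lambda>w. (psiL b w, psiR b w)) ((\<lambda>(L,R). phi b L R) x) = x"
      using phictx.psiL_phi phictx.psiR_phi xe by fastforce
  qed
  show "\<forall>y\<in>OS n b. (\<lambda>(L,R). phi b L R) ((\<lambda>w. (psiL b w, psiR b w)) y) = y"
  proof
    fix w assume "w \<in> OS n b"
    then obtain i k where "w \<in> perms n" "occ321 w = {(i, b-1, k)}" by (rule OS_single)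
    then have "psictx n b w i k" unfolding psictx_def by simp
    then show "(\<lambda>(L,R). phi b L R) ((\<lambda>w. (psiL b w, psiR b w)) w) = w"
      using psictx.phi_psi by fastforce
  qed
  show "(\<lambda>(L,R). phi b L R) ` (LS b \<times> RS n b) \<subseteq> OS n b"
  proof
    fix y assume "y \<in> (\<lambda>(L,R). phi b L R) ` (LS b \<times> RS n b)"
    then obtain L R where LR: "L \<in> LS b" "R \<in> RS n b" "y = phi b L R" by auto
    have pc: "phictx n b L R" unfolding phictx_def using LR b2 bn unfolding LS_def RS_def by auto
    obtain i0 k0 where o: "occ321 (phi b L R) = {(i0, b-1, k0)}" using phictx.w_occ[OF pc] by blast
    show "y \<in> OS n b" unfolding OS_def using phictx.w_perm[OF pc] o LR(3) by auto
  qed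
  show "(\<lambda>w. (psiL b w, psiR b w)) ` OS n b \<subseteq> LS b \<times> RS n b"
  proof
    fix y assume "y \<in> (\<lambda>w. (psiL b w, psiR b w)) ` OS n b"
    then obtain w where w: "w \<in> OS n b" "y = (psiL b w, psiR b w)" by auto
    then obtain i k where "w \<in> perms n" "occ321 w = {(i, b-1, k)}" by (elim OS_single)
    then have pc: "psictx n b w i k" unfolding psictx_def by simp
    show "y \<in> LS b \<times> RS n b" unfolding LS_def RS_def w(2)
      using psictx.Lw_perm[OF pc] psictx.Lw_av[OF pc] psictx.Lw_last'[OF pc]
        psictx.Rw_distinct[OF pc] psictx.Rw_set[OF pc] psictx.Rw_av[OF pc] psictx.Rw_hd[OF pc] by simp
  qed
qed

lemma card_OS:
  assumes "2 \<le> b" "b < n"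
  shows "card (OS n b) = card (LS b) * card (RS n b)"
proof -
  have "card (LS b \<times> RS n b) = card (OS n b)" by (rule bij_betw_same_card[OF bij_OS[OF assms]])
  then show ?thesis by (simp add: card_cartesian_product)
qed

lemma occ321_shift: "occ321 (map (\<lambda>x. x + d) v) = occ321 v"
  unfolding occ321_def by auto

lemma RS_shift:
  assumes b1: "1 \<le> b" and bn: "b \<le> n"
  shows "RS n b = map (\<lambda>x. x + (b-1)) ` {R \<in> perms (n-b+1). avoids321 R \<and> hd R \<noteq> 1}"
proof -
  let ?d = "b - 1"
  let ?h = "\<lambda>x. x + ?d"
  have img: "?h ` {1..n-b+1} = {b..n}"
  proof -
    have "?h ` {1..n-b+1} = {1 + ?d..n-b+1 + ?d}" by (rule image_add_atLeastAtMost')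
    moreover have "1 + ?d = b" "n-b+1 + ?d = n" using b1 bn by auto
    ultimately show ?thesis by simp
  qed
  have injh: "inj ?h" by (simp add: inj_def)
  show ?thesis
  proof (rule set_eqI, rule iffI)
    fix R assume R: "R \<in> RS n b"
    then have Rd: "distinct R" "set R = {b..n}" "avoids321 R" "hd R \<noteq> b" unfolding RS_def by auto
    define R' where "R' = map (\<lambda>x. x - ?d) R"
    have mR: "map ?h R' = R" unfolding R'_def map_map by (rule map_idI) (use Rd(2) b1 in auto)
    have "?h ` set R' = ?h ` {1..n-b+1}" using mR Rd(2) img by (metis list.set_map)
    then have sR': "set R' = {1..n-b+1}" by (rule iffD1[OF inj_image_eq_iff[OF injh]])
    have dR': "distinct R'" using Rd(1) mR by (metis distinct_map)
    have "R' \<noteq> []" using sR' bn by auto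
    then have "hd R = hd R' + ?d" using mR by (metis hd_map)
    then have "hd R' \<noteq> 1" using Rd(4) b1 by auto
    moreover have "avoids321 R'" using Rd(3) mR occ321_shift[of ?d R'] unfolding avoids321_def by simp
    ultimately show "R \<in> map ?h ` {R \<in> perms (n-b+1). avoids321 R \<and> hd R \<noteq> 1}"
      using mR dR' sR' unfolding perms_def by (metis (mono_tags, lifting) image_eqI mem_Collect_eq)
  next
    fix R assume "R \<in> map ?h ` {R \<in> perms (n-b+1). avoids321 R \<and> hd R \<noteq> 1}"
    then obtain R' where R': "R' \<in> perms (n-b+1)" "avoids321 R'" "hd R' \<noteq> 1" "R = map ?h R'" by auto
    have s1: "set R = ?h ` set R'" unfolding R'(4) by (rule set_map)
    have s2: "set R' = {1..n-b+1}" using R'(1) unfolding perms_def by simp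
    have "set R = {b..n}" unfolding s1 s2 img by (rule refl)
    moreover have "distinct R" using R' injh unfolding perms_def by (simp add: distinct_map inj_on_def)
    moreover have "avoids321 R" using R'(2,4) occ321_shift[of ?d R'] unfolding avoids321_def by simp
    moreover have "hd R \<noteq> b"
    proof -
      have "R' \<noteq> []" using R'(1) unfolding perms_def using bn by auto
      then have "hd R = hd R' + ?d" using R'(4) by (simp add: hd_map)
      then show ?thesis using R'(3) b1 by auto
    qed
    ultimately show "R \<in> RS n b" unfolding RS_def by simp
  qed
qed

lemma card_RS:
  assumes "1 \<le> b" "b \<le> n"
  shows "card (RS n b) = card {R \<in> perms (n-b+1). avoids321 R \<and> hd R \<noteq> 1}"
  unfolding RS_shift[OF assms]
  by (rule card_image) (simp add: inj_on_def)

lemma card_split: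
  assumes "finite A"
  shows "card {x \<in> A. P x} = card {x \<in> A. P x \<and> Q x} + card {x \<in> A. P x \<and> \<not> Q x}"
proof -
  have "{x \<in> A. P x} = {x \<in> A. P x \<and> Q x} \<union> {x \<in> A. P x \<and> \<not> Q x}" by auto
  moreover have "card ({x \<in> A. P x \<and> Q x} \<union> {x \<in> A. P x \<and> \<not> Q x})
      = card {x \<in> A. P x \<and> Q x} + card {x \<in> A. P x \<and> \<not> Q x}"
    by (rule card_Un_disjoint) (use assms in auto)
  ultimately show ?thesis by simp
qed

lemma part_last:
  assumes "m \<ge> 1"
  shows "int (card {w \<in> perms m. avoids321 w \<and> last w \<noteq> m}) = int (catalan m) - int (catalan (m - 1))"
proof -
  have "card {w \<in> perms m. avoids321 w} = card {w \<in> perms m. avoids321 w \<and> last w = m} + card {w \<in> perms m. avoids321 w \<and> last w \<noteq> m}"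
    using card_split[OF finite_perms] .
  then show ?thesis using Av_count[of m] card_last[OF assms] by simp
qed

lemma part_hd:
  assumes "m \<ge> 1"
  shows "int (card {w \<in> perms m. avoids321 w \<and> hd w \<noteq> 1}) = int (catalan m) - int (catalan (m - 1))"
proof -
  have "card {w \<in> perms m. avoids321 w} = card {w \<in> perms m. avoids321 w \<and> hd w = 1} + card {w \<in> perms m. avoids321 w \<and> hd w \<noteq> 1}"
    using card_split[OF finite_perms] .
  then show ?thesis using Av_count[of m] card_hd[OF assms] by simp
qed

lemma once_count:
  assumes n3: "n \<ge> 3"
  shows "int (card {w \<in> perms n. contains321_once w})
       = (\<Sum>b = 2..n-1. (int (catalan b) - int (catalan (b - 1)))
                         * (int (catalan (n - b + 1)) - int (catalan (n - b))))"
proof -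
  have U: "{w \<in> perms n. contains321_once w} = (\<Union>b\<in>{2..n-1}. OS n b)"
  proof (rule set_eqI, rule iffI)
    fix w assume w: "w \<in> {w \<in> perms n. contains321_once w}"
    then have wp: "w \<in> perms n" and c1: "card (occ321 w) = 1" unfolding contains321_once_def by auto
    from c1 obtain x where "occ321 w = {x}" by (rule card_1_singletonE)
    then obtain i j k where ijk: "(i,j,k) \<in> occ321 w" by (cases x) auto
    then have "i < j" "j < k" "k < n" unfolding occ321_def using perms_length[OF wp] by auto
    then have b: "Suc j \<in> {2..n-1}" by auto
    have "(i, Suc j - 1, k) \<in> occ321 w" using ijk by simp
    then have "w \<in> OS n (Suc j)" unfolding OS_def using wp c1 by blast
    then show "w \<in> (\<Union>b\<in>{2..n-1}. OS n b)" using b by blast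
  next
    fix w assume "w \<in> (\<Union>b\<in>{2..n-1}. OS n b)"
    then show "w \<in> {w \<in> perms n. contains321_once w}" unfolding OS_def contains321_once_def by auto
  qed
  have fin: "finite (OS n b)" for b
    by (rule finite_subset[OF _ finite_perms[of n]]) (auto simp: OS_def)
  have disj: "\<forall>b\<in>{2..n-1}. \<forall>b'\<in>{2..n-1}. b \<noteq> b' \<longrightarrow> OS n b \<inter> OS n b' = {}"
  proof (intro ballI impI)
    fix b b' assume bb: "b \<in> {2..n-1}" "b' \<in> {2..n-1}" "b \<noteq> b'"
    show "OS n b \<inter> OS n b' = {}"
    proof (rule ccontr)
      assume "OS n b \<inter> OS n b' \<noteq> {}"
      then obtain w where w: "w \<in> OS n b" "w \<in> OS n b'" by blast
      from w(1) obtain i k where o: "occ321 w = {(i, b-1, k)}" by (rule OS_single)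
      from w(2) obtain i' k' where "(i', b'-1, k') \<in> occ321 w" unfolding OS_def by auto
      then have "b' - 1 = b - 1" using o by simp
      then show False using bb by auto
    qed
  qed
  have "card {w \<in> perms n. contains321_once w} = (\<Sum>b\<in>{2..n-1}. card (OS n b))"
    unfolding U by (rule card_UN_disjoint) (use fin disj in auto)
  then have "int (card {w \<in> perms n. contains321_once w}) = (\<Sum>b\<in>{2..n-1}. int (card (OS n b)))"
    by simp
  also have "\<dots> = (\<Sum>b = 2..n-1. (int (catalan b) - int (catalan (b - 1)))
                         * (int (catalan (n - b + 1)) - int (catalan (n - b))))"
  proof (rule sum.cong)
    fix b assume b: "b \<in> {2..n-1}"
    then have b2: "2 \<le> b" "b < n" using n3 by auto
    have "int (card (OS n b)) = int (card (LS b)) * int (card (RS n b))"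
      using card_OS[OF b2] by simp
    moreover have "int (card (LS b)) = int (catalan b) - int (catalan (b - 1))"
      unfolding LS_def using part_last[of b] b2 by simp
    moreover have "int (card (RS n b)) = int (catalan (n - b + 1)) - int (catalan (n - b))"
    proof -
      have "int (card (RS n b)) = int (card {R \<in> perms (n-b+1). avoids321 R \<and> hd R \<noteq> 1})"
        using card_RS[of b n] b2 by simp
      also have "\<dots> = int (catalan (n - b + 1)) - int (catalan (n - b + 1 - 1))"
        by (rule part_hd) simp
      finally show ?thesis by simp
    qed
    ultimately show "int (card (OS n b)) = (int (catalan b) - int (catalan (b - 1)))
                         * (int (catalan (n - b + 1)) - int (catalan (n - b)))" by simp
  qed simp
  finally show ?thesis .
qed

theorem mainTheorem3:
  shows "(\<forall>m::nat. m \<ge> 1 \<longrightarrow>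
            int (card {w \<in> perms m. avoids321 w \<and> last w \<noteq> m})
              = int (catalan m) - int (catalan (m - 1))
          \<and> int (card {w \<in> perms m. avoids321 w \<and> hd w \<noteq> 1})
              = int (catalan m) - int (catalan (m - 1)))
       \<and> (\<forall>n::nat. n \<ge> 3 \<longrightarrow>
            int (card {w \<in> perms n. contains321_once w})
              = (\<Sum>b = 2..n-1. (int (catalan b) - int (catalan (b - 1)))
                                * (int (catalan (n - b + 1)) - int (catalan (n - b)))))"
  using part_last part_hd once_count by blast


end
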